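(* Consider the budget-constrained finite-horizon reinsurance model of the context with $\rho_n=\mathrm{VaR}_{\alpha_n}$, $\alpha_n\in(0,1)$, deterministic premium income $Z_{n+1}\equiv z_{n+1}\in\mathbb R_+$, and Wang reinsurance premium $\pi_{R,n}(X)=(1+\theta)\int_0^\infty g(S_X(t))\,dt$ with $\theta\ge0$ and a left-continuous distortion function $g$, where $\pi_{R,n}(Y_{n+1})<\infty$ for all $n$. For $n=0,\dots,N-1$ put $q_n=\mathrm{VaR}_{\alpha_n}(Y_{n+1})$ and, for $a\in[0,q_n]$, the layer retained loss function $h_a(t)=\max\{\min\{a,t\},\,t-q_n+a\}$, $t\ge0$. Let $$a_n^*=\begin{cases}\inf\{a\in[0,q_n]:1-(1+\theta)g(S_{Y_{n+1}}(a))\ge 0\}, & \text{if } g(1-\alpha_n)<\frac1{1+\theta},\\ q_n,&\text{otherwise,}\end{cases}$$ and $a_n(x)=\min\{a\in[a_n^*,q_n]:\pi_{R,n}(h_a)\le x^+\}$ for $x\in\mathbb R$. Then $h_a\in\mathcal F$ for all $a\in[0,q_n]$, $a_n(x)$ is well defined, and the Markov decision rules $d_n^*(x)=h_{a_n(x)}$ satisfy $\mathcal T_{n,d_n^*}J_{n+1}=\mathcal T_nJ_{n+1}$ for all $n$; consequently the Markov policy $(d_0^*,\dots,d_{N-1}^* )$ is optimal, i.e. attains $V_0(x)=\inf_{\pi\in\Pi}V_{0\pi}(x)$ for every $x\in\mathbb R$.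
   Context: Probability space $(\Omega,\mathcal A,\mathbb P)$, $p\in[1,\infty)$, $L^p$ real random variables with finite $p$-th moment, $L^p_+$ nonnegative ones. $F_X$ is the distribution function, $S_X=1-F_X$ the survival function and $F_X^{-1}(u)=\inf\{x:F_X(x)\ge u\}$ the quantile function of $X$; $\mathrm{VaR}_\alpha(X)=F_X^{-1}(\alpha)$. A distortion function is an increasing $g:[0,1]\to[0,1]$ with $g(0)=0$, $g(1)=1$. $\mathcal F=\{f:\mathbb R_+\to\mathbb R_+ : f(t)\le t\ \forall t,\ f\text{ increasing},\ \mathrm{id}_{\mathbb R_+}-f\text{ increasing}\}$ with the metric of compact convergence. Finite-horizon model: horizon $N\in\mathbb N$, discount factor $\beta\in(0,1]$; $Y_1,\dots,Y_N\in L^p_+$ independent claims; for $f\in\mathcal F$, $\pi_{R,n}(f):=\pi_{R,n}(Y_{n+1}-f(Y_{n+1}))$; budget-constrained admissible actions $D_n(x)=\{f\in\mathcal F:\pi_{R,n}(f)\le x^+\}$. Histories $h_n=(x_0,f_0,\dots,f_{n-1},x_n)$ with $f_k\in D_k(x_k)$; policies $\pi=(d_0,\dots,d_{N-1})$ of measurable $d_n$ (of the history) with $d_n(h_n)\in D_n(x_n)$; policy values $V_{N\pi}\equiv0$, $V_{n\pi}(h_n)=\rho_n\big(d_n(h_n)(Y_{n+1})+\pi_{R,n}(d_n(h_n))-z_{n+1}-x_n+\beta V_{n+1,\pi}(h_n,d_n(h_n),x_n+z_{n+1}-d_n(h_n)(Y_{n+1})-\pi_{R,n}(d_n(h_n)))\big)$,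 $V_n=\inf_\pi V_{n\pi}$. A Markov decision rule is a measurable $d:\mathbb R\to\mathcal F$ with $d(x)\in D_n(x)$. $J_N\equiv0$ and $J_n(x)=\inf$ over Markov policies of the policy values started in $x$ at time $n$; it is known (Bellman equation) that $J_n=\mathcal T_nJ_{n+1}$ and $J_n$ is decreasing and lower semicontinuous. Operators: $\mathcal T_{n,d}v(x)=\rho_n\big(d(x)(Y_{n+1})+\pi_{R,n}(d(x))-z_{n+1}-x+\beta v(x+z_{n+1}-d(x)(Y_{n+1})-\pi_{R,n}(d(x)))\big)$ and $\mathcal T_nv(x)=\inf_{f\in D_n(x)}\rho_n\big(f(Y_{n+1})+\pi_{R,n}(f)-z_{n+1}-x+\beta v(x+z_{n+1}-f(Y_{n+1})-\pi_{R,n}(f))\big)$. *)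

theory Defs
  imports "HOL-Probability.Probability"
begin

definition cdf_of :: "'a measure \<Rightarrow> ('a \<Rightarrow> real) \<Rightarrow> real \<Rightarrow> real" where
  "cdf_of M X x = measure M {\<omega> \<in> space M. X \<omega> \<le> x}"

definition surv_of :: "'a measure \<Rightarrow> ('a \<Rightarrow> real) \<Rightarrow> real \<Rightarrow> real" where
  "surv_of M X x = 1 - cdf_of M X x"

definition quantile_of :: "'a measure \<Rightarrow> ('a \<Rightarrow> real) \<Rightarrow> real \<Rightarrow> real" where
  "quantile_of M X u = Inf {x. u \<le> cdf_of M X x}"

definition VaR :: "'a measure \<Rightarrow> real \<Rightarrow> ('a \<Rightarrow> real) \<Rightarrow> real" where
  "VaR M \<alpha> X = quantile_of M X \<alpha>"

definition distortion :: "(real \<Rightarrow> real) \<Rightarrow> bool" where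
  "distortion g \<longleftrightarrow> mono_on {0..1} g \<and> g 0 = 0 \<and> g 1 = 1"

definition wang_premium :: "'a measure \<Rightarrow> real \<Rightarrow> (real \<Rightarrow> real) \<Rightarrow> ('a \<Rightarrow> real) \<Rightarrow> real" where
  "wang_premium M \<theta> g X = (1 + \<theta>) * (LINT t:{0..}|lborel. g (surv_of M X t))"

text \<open>Elements of the class F (functions on the nonnegative reals) are represented as
  functions real to real that vanish on the negative reals.\<close>

definition Fset :: "(real \<Rightarrow> real) set" where
  "Fset = {f. (\<forall>t<0. f t = 0) \<and> (\<forall>t\<ge>0. 0 \<le> f t \<and> f t \<le> t)
             \<and> mono_on {0..} f \<and> mono_on {0..} (\<lambda>t. t - f t)}"

definition layer :: "real \<Rightarrow> real \<Rightarrow> real \<Rightarrow> real" where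
  "layer q a t = (if t < 0 then 0 else max (min a t) (t - q + a))"

text \<open>Generic parameters: rho n is the risk measure at stage n, prem n f = pi_{R,n}(f),
  Y k is the claim of period k, z k the premium income of period k, beta the discount.\<close>

definition adm_actions :: "(nat \<Rightarrow> (real \<Rightarrow> real) \<Rightarrow> real) \<Rightarrow> nat \<Rightarrow> real \<Rightarrow> (real \<Rightarrow> real) set" where
  "adm_actions prem n x = {f \<in> Fset. prem n f \<le> max x 0}"

type_synonym hist = "(nat \<Rightarrow> real) \<times> (nat \<Rightarrow> real \<Rightarrow> real)"

text \<open>A history h_n = (x_0,f_0,...,f_{n-1},x_n) is encoded as the pair
  (k in {..n} |-> x_k, k in {..<n} |-> f_k); the action space F carries the Borel
  sigma-algebra of the (pointwise) function topology.\<close>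
definition hist_space :: "nat \<Rightarrow> hist measure" where
  "hist_space n = (\<Pi>\<^sub>M k\<in>{..n}. borel) \<Otimes>\<^sub>M (\<Pi>\<^sub>M k\<in>{..<n}. borel)"

definition adm_hist :: "(nat \<Rightarrow> (real \<Rightarrow> real) \<Rightarrow> real) \<Rightarrow> nat \<Rightarrow> hist set" where
  "adm_hist prem n = {h \<in> space (hist_space n). \<forall>k<n. snd h k \<in> adm_actions prem k (fst h k)}"

definition policies :: "(nat \<Rightarrow> (real \<Rightarrow> real) \<Rightarrow> real) \<Rightarrow> nat \<Rightarrow> (nat \<Rightarrow> hist \<Rightarrow> (real \<Rightarrow> real)) set" where
  "policies prem N = {pol. \<forall>n<N.
      pol n \<in> restrict_space (hist_space n) (adm_hist prem n) \<rightarrow>\<^sub>M borel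
      \<and> (\<forall>h\<in>adm_hist prem n. pol n h \<in> adm_actions prem n (fst h n))}"

definition init_hist :: "real \<Rightarrow> hist" where
  "init_hist x = ((\<lambda>k\<in>{..0::nat}. x), (\<lambda>k\<in>{..<0::nat}. undefined))"

text \<open>polval_rem ... m pol n h: value of policy pol at time n in history h, m = N - n steps left.\<close>
fun polval_rem :: "(nat \<Rightarrow> ('a \<Rightarrow> real) \<Rightarrow> real) \<Rightarrow> (nat \<Rightarrow> (real \<Rightarrow> real) \<Rightarrow> real)
    \<Rightarrow> (nat \<Rightarrow> 'a \<Rightarrow> real) \<Rightarrow> (nat \<Rightarrow> real) \<Rightarrow> real
    \<Rightarrow> nat \<Rightarrow> (nat \<Rightarrow> hist \<Rightarrow> (real \<Rightarrow> real)) \<Rightarrow> nat \<Rightarrow> hist \<Rightarrow> real" where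
  "polval_rem \<rho> prem Y z \<beta> 0 pol n h = 0"
| "polval_rem \<rho> prem Y z \<beta> (Suc m) pol n h =
     (let f = pol n h; x = fst h n in
      \<rho> n (\<lambda>\<omega>. f (Y (Suc n) \<omega>) + prem n f - z (Suc n) - x
             + \<beta> * polval_rem \<rho> prem Y z \<beta> m pol (Suc n)
                 ((fst h)(Suc n := x + z (Suc n) - f (Y (Suc n) \<omega>) - prem n f), (snd h)(n := f))))"

definition policy_value where
  "policy_value \<rho> prem Y z \<beta> N pol n h = polval_rem \<rho> prem Y z \<beta> (N - n) pol n h"

definition markov_rules :: "(nat \<Rightarrow> (real \<Rightarrow> real) \<Rightarrow> real) \<Rightarrow> nat \<Rightarrow> (real \<Rightarrow> (real \<Rightarrow> real)) set" where
  "markov_rules prem n = {d. d \<in> borel \<rightarrow>\<^sub>M borel \<and> (\<forall>x. d x \<in> adm_actions prem n x)}"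

fun markov_val_rem :: "(nat \<Rightarrow> ('a \<Rightarrow> real) \<Rightarrow> real) \<Rightarrow> (nat \<Rightarrow> (real \<Rightarrow> real) \<Rightarrow> real)
    \<Rightarrow> (nat \<Rightarrow> 'a \<Rightarrow> real) \<Rightarrow> (nat \<Rightarrow> real) \<Rightarrow> real
    \<Rightarrow> nat \<Rightarrow> (nat \<Rightarrow> real \<Rightarrow> (real \<Rightarrow> real)) \<Rightarrow> nat \<Rightarrow> real \<Rightarrow> real" where
  "markov_val_rem \<rho> prem Y z \<beta> 0 dd n x = 0"
| "markov_val_rem \<rho> prem Y z \<beta> (Suc m) dd n x =
     (let f = dd n x in
      \<rho> n (\<lambda>\<omega>. f (Y (Suc n) \<omega>) + prem n f - z (Suc n) - x
             + \<beta> * markov_val_rem \<rho> prem Y z \<beta> m dd (Suc n) (x + z (Suc n) - f (Y (Suc n) \<omega>) - prem n f)))"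

text \<open>J_n(x): infimum over Markov policies (d_n,...,d_{N-1}) of the value started in x at time n.\<close>
definition opt_markov_value where
  "opt_markov_value \<rho> prem Y z \<beta> N n x =
     (INF dd \<in> {dd. \<forall>k\<in>{n..<N}. dd k \<in> markov_rules prem k}. markov_val_rem \<rho> prem Y z \<beta> (N - n) dd n x)"

definition stage_value where
  "stage_value \<rho> prem Y z \<beta> n f v x =
     \<rho> n (\<lambda>\<omega>. f (Y (Suc n) \<omega>) + prem n f - z (Suc n) - x
            + \<beta> * v (x + z (Suc n) - f (Y (Suc n) \<omega>) - prem n f))"

definition T_dec where
  "T_dec \<rho> prem Y z \<beta> n d v x = stage_value \<rho> prem Y z \<beta> n (d x) v x"

definition T_opt where
  "T_opt \<rho> prem Y z \<beta> n v x = (INF f \<in> adm_actions prem n x. stage_value \<rho> prem Y z \<beta> n f v x)"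


definition wang_prem :: "'a measure \<Rightarrow> real \<Rightarrow> (real \<Rightarrow> real) \<Rightarrow> (nat \<Rightarrow> 'a \<Rightarrow> real) \<Rightarrow> nat \<Rightarrow> (real \<Rightarrow> real) \<Rightarrow> real" where
  "wang_prem M \<theta> g Y n f = wang_premium M \<theta> g (\<lambda>\<omega>. Y (Suc n) \<omega> - f (Y (Suc n) \<omega>))"

definition q_level :: "'a measure \<Rightarrow> (nat \<Rightarrow> real) \<Rightarrow> (nat \<Rightarrow> 'a \<Rightarrow> real) \<Rightarrow> nat \<Rightarrow> real" where
  "q_level M \<alpha> Y n = VaR M (\<alpha> n) (Y (Suc n))"

definition a_star :: "'a measure \<Rightarrow> real \<Rightarrow> (real \<Rightarrow> real) \<Rightarrow> (nat \<Rightarrow> real) \<Rightarrow> (nat \<Rightarrow> 'a \<Rightarrow> real) \<Rightarrow> nat \<Rightarrow> real" where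
  "a_star M \<theta> g \<alpha> Y n = (if g (1 - \<alpha> n) < 1 / (1 + \<theta>)
     then Inf {a \<in> {0..q_level M \<alpha> Y n}. 0 \<le> 1 - (1 + \<theta>) * g (surv_of M (Y (Suc n)) a)}
     else q_level M \<alpha> Y n)"

definition a_opt :: "'a measure \<Rightarrow> real \<Rightarrow> (real \<Rightarrow> real) \<Rightarrow> (nat \<Rightarrow> real) \<Rightarrow> (nat \<Rightarrow> 'a \<Rightarrow> real) \<Rightarrow> nat \<Rightarrow> real \<Rightarrow> real" where
  "a_opt M \<theta> g \<alpha> Y n x = (LEAST a. a \<in> {a_star M \<theta> g \<alpha> Y n..q_level M \<alpha> Y n}
      \<and> wang_prem M \<theta> g Y n (layer (q_level M \<alpha> Y n) a) \<le> max x 0)"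

definition d_star :: "'a measure \<Rightarrow> real \<Rightarrow> (real \<Rightarrow> real) \<Rightarrow> (nat \<Rightarrow> real) \<Rightarrow> (nat \<Rightarrow> 'a \<Rightarrow> real) \<Rightarrow> nat \<Rightarrow> real \<Rightarrow> (real \<Rightarrow> real)" where
  "d_star M \<theta> g \<alpha> Y n x = layer (q_level M \<alpha> Y n) (a_opt M \<theta> g \<alpha> Y n x)"

end

theory Submission
  imports Defs
begin

lemma cdf_of_distr:
  assumes "X \<in> borel_measurable M"
  shows "cdf_of M X x = cdf (distr M borel X) x"
proof -
  have "measure (distr M borel X) {..x} = measure M (X -` {..x} \<inter> space M)"
    using assms by (simp add: measure_distr)
  also have "X -` {..x} \<inter> space M = {\<omega> \<in> space M. X \<omega> \<le> x}" by auto
  finally show ?thesis by (simp add: cdf_of_def cdf_def)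
qed

context prob_space
begin

lemma VaR_le_iff:
  assumes X: "X \<in> borel_measurable M" and a: "0 < \<alpha>" "\<alpha> < 1"
  shows "VaR M \<alpha> X \<le> c \<longleftrightarrow> \<alpha> \<le> cdf_of M X c"
proof -
  interpret D: real_distribution "distr M borel X" using X by simp
  define F where "F = cdf (distr M borel X)"
  have Feq: "\<And>x. cdf_of M X x = F x" using X by (simp add: cdf_of_distr F_def)
  define S where "S = {x. \<alpha> \<le> F x}"
  have V: "VaR M \<alpha> X = Inf S" by (simp add: VaR_def quantile_of_def Feq S_def)
  have "eventually (\<lambda>x. F x > \<alpha>) at_top"
    using D.cdf_lim_at_top_prob a unfolding F_def by (simp add: order_tendstoD(1))
  then obtain x0 where "F x0 > \<alpha>" by (meson eventually_at_top_linorder order.refl)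
  hence ne: "S \<noteq> {}" unfolding S_def by (auto intro!: exI[of _ x0])
  have "eventually (\<lambda>x. F x < \<alpha>) at_bot"
    using D.cdf_lim_at_bot a unfolding F_def by (simp add: order_tendstoD(2))
  then obtain B where B: "\<And>x. x \<le> B \<Longrightarrow> F x < \<alpha>" by (auto simp: eventually_at_bot_linorder)
  have bdd: "bdd_below S" unfolding S_def bdd_below_def
    by (rule exI[of _ B]) (smt (verit, best) B mem_Collect_eq)
  have mono: "\<And>x y. x \<le> y \<Longrightarrow> F x \<le> F y" unfolding F_def by (rule D.cdf_nondecreasing)
  have inS: "\<alpha> \<le> F (Inf S)"
  proof (rule tendsto_lowerbound)
    show "(F \<longlongrightarrow> F (Inf S)) (at_right (Inf S))"
      using D.cdf_is_right_cont[of "Inf S"] unfolding F_def continuous_within by simp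
    show "eventually (\<lambda>x. \<alpha> \<le> F x) (at_right (Inf S))"
      using eventually_at_right_less[of "Inf S"]
    proof (rule eventually_mono)
      fix x assume "Inf S < x"
      then obtain s where "s \<in> S" "s < x" using cInf_less_iff[OF ne bdd] by auto
      thus "\<alpha> \<le> F x" using mono[of s x] unfolding S_def by auto
    qed
  qed (simp add: trivial_limit_at_right_real)
  show ?thesis
  proof
    assume "VaR M \<alpha> X \<le> c" thus "\<alpha> \<le> cdf_of M X c" using inS mono V Feq by (metis order_trans)
  next
    assume "\<alpha> \<le> cdf_of M X c" thus "VaR M \<alpha> X \<le> c" using V Feq bdd
      by (metis S_def cInf_lower mem_Collect_eq)
  qed
qed

lemma VaR_cdf:
  assumes X: "X \<in> borel_measurable M" and a: "0 < \<alpha>" "\<alpha> < 1"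
  shows "\<alpha> \<le> cdf_of M X (VaR M \<alpha> X)"
  using VaR_le_iff[OF assms, of "VaR M \<alpha> X"] by simp

lemma VaR_below:
  assumes X: "X \<in> borel_measurable M" and a: "0 < \<alpha>" "\<alpha> < 1" and y: "y < VaR M \<alpha> X"
  shows "cdf_of M X y < \<alpha>"
  using VaR_le_iff[OF X a, of y] y by linarith

lemma VaR_nonneg:
  assumes X: "X \<in> borel_measurable M" and a: "0 < \<alpha>" "\<alpha> < 1" and nn: "\<forall>\<omega>\<in>space M. 0 \<le> X \<omega>"
  shows "0 \<le> VaR M \<alpha> X"
proof (rule ccontr)
  assume "\<not> 0 \<le> VaR M \<alpha> X"
  hence "{\<omega> \<in> space M. X \<omega> \<le> VaR M \<alpha> X} = {}" using nn by force
  hence "cdf_of M X (VaR M \<alpha> X) = 0" unfolding cdf_of_def by (metis measure_empty)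
  thus False using VaR_cdf[OF X a] a by simp
qed

lemma VaR_upper:
  assumes Y: "Y \<in> borel_measurable M" and a: "0 < \<alpha>" "\<alpha> < 1" and nn: "\<forall>\<omega>\<in>space M. 0 \<le> Y \<omega>"
    and psi: "(\<lambda>\<omega>. \<psi> (Y \<omega>)) \<in> borel_measurable M" and mono: "mono_on {0..} \<psi>"
  shows "VaR M \<alpha> (\<lambda>\<omega>. \<psi> (Y \<omega>)) \<le> \<psi> (VaR M \<alpha> Y)"
proof -
  let ?q = "VaR M \<alpha> Y"
  have q0: "0 \<le> ?q" by (rule VaR_nonneg[OF Y a nn])
  have "{\<omega> \<in> space M. Y \<omega> \<le> ?q} \<subseteq> {\<omega> \<in> space M. \<psi> (Y \<omega>) \<le> \<psi> ?q}"
    using nn q0 mono by (auto intro: mono_onD)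
  moreover have "{\<omega> \<in> space M. \<psi> (Y \<omega>) \<le> \<psi> ?q} \<in> sets M" using psi by measurable
  ultimately have "cdf_of M Y ?q \<le> cdf_of M (\<lambda>\<omega>. \<psi> (Y \<omega>)) (\<psi> ?q)"
    unfolding cdf_of_def by (rule finite_measure_mono)
  hence "\<alpha> \<le> cdf_of M (\<lambda>\<omega>. \<psi> (Y \<omega>)) (\<psi> ?q)" using VaR_cdf[OF Y a] by linarith
  thus ?thesis using VaR_le_iff[OF psi a] by simp
qed

lemma VaR_lower:
  assumes Y: "Y \<in> borel_measurable M" and a: "0 < \<alpha>" "\<alpha> < 1" and nn: "\<forall>\<omega>\<in>space M. 0 \<le> Y \<omega>"
    and X: "X \<in> borel_measurable M" and le: "\<forall>\<omega>\<in>space M. \<psi> (Y \<omega>) \<le> X \<omega>"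
    and mono: "mono_on {0..} \<psi>"
    and lsc: "\<And>c. c < \<psi> (VaR M \<alpha> Y) \<Longrightarrow> \<exists>y0 < VaR M \<alpha> Y. \<forall>y. y0 < y \<and> y \<le> VaR M \<alpha> Y \<longrightarrow> c < \<psi> y"
  shows "\<psi> (VaR M \<alpha> Y) \<le> VaR M \<alpha> X"
proof (rule ccontr)
  let ?q = "VaR M \<alpha> Y"
  have q0: "0 \<le> ?q" by (rule VaR_nonneg[OF Y a nn])
  assume "\<not> \<psi> ?q \<le> VaR M \<alpha> X"
  then obtain y0 where y0: "y0 < ?q" and P: "\<forall>y. y0 < y \<and> y \<le> ?q \<longrightarrow> VaR M \<alpha> X < \<psi> y"
    using lsc[of "VaR M \<alpha> X"] by auto
  have "{\<omega> \<in> space M. X \<omega> \<le> VaR M \<alpha> X} \<subseteq> {\<omega> \<in> space M. Y \<omega> \<le> y0}"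
  proof safe
    fix \<omega> assume w: "\<omega> \<in> space M" "X \<omega> \<le> VaR M \<alpha> X"
    show "Y \<omega> \<le> y0"
    proof (rule ccontr)
      assume "\<not> Y \<omega> \<le> y0"
      hence "VaR M \<alpha> X < \<psi> (Y \<omega>)"
      proof (cases "Y \<omega> \<le> ?q")
        case True thus ?thesis using P \<open>\<not> Y \<omega> \<le> y0\<close> by auto
      next
        case False
        have "\<psi> ?q \<le> \<psi> (Y \<omega>)" using False q0 nn w(1) by (intro mono_onD[OF mono]) auto
        moreover have "VaR M \<alpha> X < \<psi> ?q" using P y0 by auto
        ultimately show ?thesis by linarith
      qed
      thus False using le w by force
    qed
  qed
  moreover have "{\<omega> \<in> space M. Y \<omega> \<le> y0} \<in> sets M" using Y by measurable
  ultimately have "cdf_of M X (VaR M \<alpha> X) \<le> cdf_of M Y y0"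
    unfolding cdf_of_def by (rule finite_measure_mono)
  moreover have "cdf_of M Y y0 < \<alpha>" by (rule VaR_below[OF Y a y0])
  ultimately show False using VaR_cdf[OF X a] by linarith
qed

end

locale model = prob_space M
  for M :: "'a measure" +
  fixes Y :: "nat \<Rightarrow> 'a \<Rightarrow> real" and N :: nat and \<beta> \<theta> :: real
    and \<alpha> z :: "nat \<Rightarrow> real" and g :: "real \<Rightarrow> real"
  assumes Ymeas: "\<And>k. k \<in> {1..N} \<Longrightarrow> Y k \<in> borel_measurable M"
  and Ynn: "\<And>k \<omega>. k \<in> {1..N} \<Longrightarrow> \<omega> \<in> space M \<Longrightarrow> 0 \<le> Y k \<omega>"
  and beta: "0 < \<beta>"
  and alpha: "\<And>n. n < N \<Longrightarrow> 0 < \<alpha> n \<and> \<alpha> n < 1"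
  and theta: "0 \<le> \<theta>"
  and gdist: "distortion g"
  and gint: "\<And>n. n < N \<Longrightarrow> set_integrable lborel {0..} (\<lambda>t. g (surv_of M (Y (Suc n)) t))"
begin

lemma g_mono: "0 \<le> u \<Longrightarrow> u \<le> v \<Longrightarrow> v \<le> 1 \<Longrightarrow> g u \<le> g v"
  using gdist unfolding distortion_def by (auto intro: mono_onD)

lemma g_01: "0 \<le> u \<Longrightarrow> u \<le> 1 \<Longrightarrow> 0 \<le> g u \<and> g u \<le> 1"
  using g_mono[of 0 u] g_mono[of u 1] gdist unfolding distortion_def by auto

lemma cdf_01: "0 \<le> cdf_of M X t \<and> cdf_of M X t \<le> 1"
  unfolding cdf_of_def by (simp add: measure_nonneg)

lemma surv_01: "0 \<le> surv_of M X t \<and> surv_of M X t \<le> 1"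
  using cdf_01[of X t] unfolding surv_of_def by auto

lemma cdf_mono: "X \<in> borel_measurable M \<Longrightarrow> t \<le> t' \<Longrightarrow> cdf_of M X t \<le> cdf_of M X t'"
  unfolding cdf_of_def by (rule finite_measure_mono) (auto, measurable)

lemma surv_antimono: "X \<in> borel_measurable M \<Longrightarrow> t \<le> t' \<Longrightarrow> surv_of M X t' \<le> surv_of M X t"
  using cdf_mono[of X t t'] unfolding surv_of_def by auto

lemma gS_meas:
  assumes X: "X \<in> borel_measurable M"
  shows "(\<lambda>t. g (surv_of M X t)) \<in> borel_measurable borel"
proof -
  have "mono (\<lambda>t. - g (surv_of M X t))"
    by (rule monoI) (use surv_antimono[OF X] surv_01 g_mono in auto)
  hence "(\<lambda>t. - g (surv_of M X t)) \<in> borel_measurable borel" by (rule borel_measurable_mono)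
  hence "(\<lambda>t. - (- g (surv_of M X t))) \<in> borel_measurable borel" by measurable
  thus ?thesis by simp
qed

lemma gS_nonneg: "0 \<le> g (surv_of M X t)" using g_01 surv_01 by blast

lemma cdf_dom:
  assumes X1: "X1 \<in> borel_measurable M" and X2: "X2 \<in> borel_measurable M"
    and le: "\<forall>\<omega>\<in>space M. X1 \<omega> \<le> X2 \<omega>"
  shows "cdf_of M X2 t \<le> cdf_of M X1 t"
  unfolding cdf_of_def by (rule finite_measure_mono) (use le in force, use X1 in measurable)

lemma gS_dom:
  assumes X1: "X1 \<in> borel_measurable M" and X2: "X2 \<in> borel_measurable M"
    and le: "\<forall>\<omega>\<in>space M. X1 \<omega> \<le> X2 \<omega>"
  shows "g (surv_of M X1 t) \<le> g (surv_of M X2 t)"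
  using cdf_dom[OF assms, of t] surv_01 g_mono unfolding surv_of_def by (metis diff_mono order.refl)

lemma prem_integrable:
  assumes n: "n < N" and X: "X \<in> borel_measurable M"
    and le: "\<forall>\<omega>\<in>space M. X \<omega> \<le> Y (Suc n) \<omega>"
  shows "set_integrable lborel {0..} (\<lambda>t. g (surv_of M X t))"
proof (rule set_integrable_bound[OF gint[OF n]])
  have [measurable]: "(\<lambda>t. g (surv_of M X t)) \<in> borel_measurable borel" by (rule gS_meas[OF X])
  show "set_borel_measurable lborel {0..} (\<lambda>t. g (surv_of M X t))"
    unfolding set_borel_measurable_def by measurable
  have YM: "Y (Suc n) \<in> borel_measurable M" using Ymeas n by auto
  show "AE x in lborel. x \<in> {0..} \<longrightarrow> norm (g (surv_of M X x)) \<le> norm (g (surv_of M (Y (Suc n)) x))"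
    using gS_dom[OF X YM le] gS_nonneg by auto
qed

lemma prem_mono:
  assumes n: "n < N" and X1: "X1 \<in> borel_measurable M" and X2: "X2 \<in> borel_measurable M"
    and le: "\<forall>\<omega>\<in>space M. X1 \<omega> \<le> X2 \<omega>" and le2: "\<forall>\<omega>\<in>space M. X2 \<omega> \<le> Y (Suc n) \<omega>"
  shows "wang_premium M \<theta> g X1 \<le> wang_premium M \<theta> g X2"
proof -
  have "(LINT t:{0..}|lborel. g (surv_of M X1 t)) \<le> (LINT t:{0..}|lborel. g (surv_of M X2 t))"
    by (rule set_integral_mono)
      (use prem_integrable[OF n X1] prem_integrable[OF n X2] le le2 gS_dom[OF X1 X2 le] in force)+
  thus ?thesis unfolding wang_premium_def using theta by (simp add: mult_left_mono)
qed

end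

lemma layer_diff: "0 \<le> y \<Longrightarrow> a \<le> q \<Longrightarrow> y - layer q a y = min (max (y - a) 0) (q - a)"
  unfolding layer_def by (auto simp: max_def min_def)

lemma layer_at_q: "0 \<le> a \<Longrightarrow> a \<le> q \<Longrightarrow> layer q a q = a"
  unfolding layer_def by (auto simp: max_def min_def)

lemma layer_Fset:
  assumes "0 \<le> a" "a \<le> q" shows "layer q a \<in> Fset"
  unfolding Fset_def mem_Collect_eq
proof (intro conjI allI impI)
  show "\<And>t. t < 0 \<Longrightarrow> layer q a t = 0" by (simp add: layer_def)
  show "\<And>t. 0 \<le> t \<Longrightarrow> 0 \<le> layer q a t" using assms by (simp add: layer_def)
  show "\<And>t. 0 \<le> t \<Longrightarrow> layer q a t \<le> t" using assms by (simp add: layer_def)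
  show "mono_on {0..} (layer q a)"
  proof (rule mono_onI)
    fix r s :: real assume "r \<in> {0..}" "s \<in> {0..}" "r \<le> s"
    thus "layer q a r \<le> layer q a s" unfolding layer_def by (simp add: max_def min_def)
  qed
  show "mono_on {0..} (\<lambda>t. t - layer q a t)"
  proof (rule mono_onI)
    fix r s :: real assume "r \<in> {0..}" "s \<in> {0..}" "r \<le> s"
    thus "r - layer q a r \<le> s - layer q a s" using layer_diff[of r a q] layer_diff[of s a q] assms
      by (simp add: max_def min_def)
  qed
qed

context model
begin

definition "Gf n s = g (surv_of M (Y (Suc n)) s)"
definition "IG n a b = (LINT s:{a..<b}|lborel. Gf n s)"
definition "qq n = q_level M \<alpha> Y n"

lemma Yn_meas: "n < N \<Longrightarrow> Y (Suc n) \<in> borel_measurable M" using Ymeas by auto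
lemma Yn_nn: "n < N \<Longrightarrow> \<omega> \<in> space M \<Longrightarrow> 0 \<le> Y (Suc n) \<omega>" using Ynn by auto
lemma alpha0: "n < N \<Longrightarrow> 0 < \<alpha> n" using alpha by auto
lemma alpha1: "n < N \<Longrightarrow> \<alpha> n < 1" using alpha by auto

lemma qq_def2: "qq n = VaR M (\<alpha> n) (Y (Suc n))" by (simp add: qq_def q_level_def)

lemma qq_nonneg: "n < N \<Longrightarrow> 0 \<le> qq n"
  unfolding qq_def2 by (rule VaR_nonneg[OF Yn_meas alpha0 alpha1]) (auto intro: Yn_nn)

lemma qq_cdf: "n < N \<Longrightarrow> \<alpha> n \<le> cdf_of M (Y (Suc n)) (qq n)"
  unfolding qq_def2 by (rule VaR_cdf[OF Yn_meas alpha0 alpha1])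

lemma qq_below: "n < N \<Longrightarrow> s < qq n \<Longrightarrow> cdf_of M (Y (Suc n)) s < \<alpha> n"
  unfolding qq_def2 by (rule VaR_below[OF Yn_meas alpha0 alpha1])

lemma Gf_meas: "n < N \<Longrightarrow> Gf n \<in> borel_measurable borel"
  unfolding Gf_def[abs_def] by (rule gS_meas[OF Yn_meas])

lemma Gf_01: "0 \<le> Gf n s \<and> Gf n s \<le> 1"
  unfolding Gf_def using g_01 surv_01 by blast

lemma Gf_antimono: "n < N \<Longrightarrow> s \<le> s' \<Longrightarrow> Gf n s' \<le> Gf n s"
  unfolding Gf_def
proof -
  assume h: "n < N" "s \<le> s'"
  have "surv_of M (Y (Suc n)) s' \<le> surv_of M (Y (Suc n)) s" by (rule surv_antimono[OF Yn_meas[OF h(1)] h(2)])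
  thus "g (surv_of M (Y (Suc n)) s') \<le> g (surv_of M (Y (Suc n)) s)"
    using surv_01[of "Y (Suc n)" s] surv_01[of "Y (Suc n)" s'] by (intro g_mono) auto
qed

lemma Gf_eq: "Gf n = (\<lambda>t. g (surv_of M (Y (Suc n)) t))" by (simp add: fun_eq_iff Gf_def)

lemma IG_integrable: "n < N \<Longrightarrow> 0 \<le> a \<Longrightarrow> set_integrable lborel {a..<b} (Gf n)"
  unfolding Gf_eq by (rule set_integrable_subset[OF gint]) auto

lemma IG_integrable_open: "n < N \<Longrightarrow> 0 \<le> a \<Longrightarrow> set_integrable lborel {a<..<b} (Gf n)"
  unfolding Gf_eq by (rule set_integrable_subset[OF gint]) auto

lemma IG_open: "n < N \<Longrightarrow> 0 \<le> a \<Longrightarrow> IG n a b = (LINT s:{a<..<b}|lborel. Gf n s)"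
  unfolding IG_def
proof (rule set_integral_cong_set)
  assume n: "n < N"
  show "set_borel_measurable lborel {a<..<b} (Gf n)" "set_borel_measurable lborel {a..<b} (Gf n)"
    unfolding set_borel_measurable_def using Gf_meas[OF n] by measurable
  show "AE x in lborel. (x \<in> {a<..<b}) = (x \<in> {a..<b})"
    using AE_lborel_singleton[of a] by eventually_elim auto
qed

lemma IG_add: "n < N \<Longrightarrow> 0 \<le> a \<Longrightarrow> a \<le> b \<Longrightarrow> b \<le> c \<Longrightarrow> IG n a c = IG n a b + IG n b c"
  unfolding IG_def
proof -
  assume h: "n < N" "0 \<le> a" "a \<le> b" "b \<le> c"
  have "{a..<c} = {a..<b} \<union> {b..<c}" using h by auto
  hence "(LINT s:{a..<c}|lborel. Gf n s) = (LINT s:{a..<b} \<union> {b..<c}|lborel. Gf n s)" by simp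
  also have "\<dots> = (LINT s:{a..<b}|lborel. Gf n s) + (LINT s:{b..<c}|lborel. Gf n s)"
    by (rule set_integral_Un) (use h IG_integrable in auto)
  finally show "(LINT s:{a..<c}|lborel. Gf n s) = (LINT s:{a..<b}|lborel. Gf n s) + (LINT s:{b..<c}|lborel. Gf n s)" .
qed

lemma IG_lower:
  assumes "n < N" "0 \<le> a" "a \<le> b" "\<And>s. a < s \<Longrightarrow> s < b \<Longrightarrow> lo \<le> Gf n s"
  shows "lo * (b - a) \<le> IG n a b"
proof -
  have "(LINT s:{a<..<b}|lborel. lo) \<le> (LINT s:{a<..<b}|lborel. Gf n s)"
    by (rule set_integral_mono) (use assms IG_integrable_open in \<open>auto simp: set_integrable_def\<close>)
  moreover have "(LINT s:{a<..<b}|lborel. lo) = lo * (b - a)"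
    using assms by (subst set_integral_const) auto
  ultimately show ?thesis using IG_open assms by simp
qed

lemma IG_upper:
  assumes "n < N" "0 \<le> a" "a \<le> b" "\<And>s. a < s \<Longrightarrow> s < b \<Longrightarrow> Gf n s \<le> hi"
  shows "IG n a b \<le> hi * (b - a)"
proof -
  have "(LINT s:{a<..<b}|lborel. Gf n s) \<le> (LINT s:{a<..<b}|lborel. hi)"
    by (rule set_integral_mono) (use assms IG_integrable_open in \<open>auto simp: set_integrable_def\<close>)
  moreover have "(LINT s:{a<..<b}|lborel. hi) = hi * (b - a)"
    using assms by (subst set_integral_const) auto
  ultimately show ?thesis using IG_open assms by simp
qed

lemma IG_nonneg: "n < N \<Longrightarrow> 0 \<le> a \<Longrightarrow> a \<le> b \<Longrightarrow> 0 \<le> IG n a b"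
  using IG_lower[of n a b 0] Gf_01 by auto

lemma IG_le: "n < N \<Longrightarrow> 0 \<le> a \<Longrightarrow> a \<le> b \<Longrightarrow> IG n a b \<le> b - a"
  using IG_upper[of n a b 1] Gf_01 by auto

end

context model begin

definition "Pp n a = wang_prem M \<theta> g Y n (layer (qq n) a)"
definition "W n a = a + Pp n a"
definition "ast n = a_star M \<theta> g \<alpha> Y n"

lemma layer_surv:
  assumes n: "n < N" and a: "0 \<le> a" "a \<le> qq n" and t: "0 \<le> t"
  shows "surv_of M (\<lambda>\<omega>. Y (Suc n) \<omega> - layer (qq n) a (Y (Suc n) \<omega>)) t
    = (if t < qq n - a then surv_of M (Y (Suc n)) (t + a) else 0)"
proof (cases "t < qq n - a")
  case True
  have "{\<omega> \<in> space M. Y (Suc n) \<omega> - layer (qq n) a (Y (Suc n) \<omega>) \<le> t} = {\<omega> \<in> space M. Y (Suc n) \<omega> \<le> t + a}"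
  proof (rule Collect_cong)
    fix \<omega> show "(\<omega> \<in> space M \<and> Y (Suc n) \<omega> - layer (qq n) a (Y (Suc n) \<omega>) \<le> t) = (\<omega> \<in> space M \<and> Y (Suc n) \<omega> \<le> t + a)"
    proof (cases "\<omega> \<in> space M")
      case True
      then show ?thesis using layer_diff[of "Y (Suc n) \<omega>" a "qq n"] Yn_nn[OF n True] a t \<open>t < qq n - a\<close>
        by (auto simp: max_def min_def split: if_splits)
    qed simp
  qed
  thus ?thesis using True unfolding surv_of_def cdf_of_def by simp
next
  case False
  have "{\<omega> \<in> space M. Y (Suc n) \<omega> - layer (qq n) a (Y (Suc n) \<omega>) \<le> t} = space M"
  proof safe
    fix \<omega> assume w: "\<omega> \<in> space M"
    show "Y (Suc n) \<omega> - layer (qq n) a (Y (Suc n) \<omega>) \<le> t"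
      using layer_diff[of "Y (Suc n) \<omega>" a "qq n"] Yn_nn[OF n w] a t False by (simp add: max_def min_def)
  qed
  thus ?thesis using False unfolding surv_of_def cdf_of_def by (simp add: prob_space)
qed

lemma g0: "g 0 = 0" using gdist unfolding distortion_def by auto

lemma Pp_formula:
  assumes n: "n < N" and a: "0 \<le> a" "a \<le> qq n"
  shows "Pp n a = (1 + \<theta>) * IG n a (qq n)"
proof -
  let ?X = "\<lambda>\<omega>. Y (Suc n) \<omega> - layer (qq n) a (Y (Suc n) \<omega>)"
  have "(LINT t:{0..}|lborel. g (surv_of M ?X t)) = (\<integral>t. indicator {0..} t *\<^sub>R g (surv_of M ?X t) \<partial>lborel)"
    by (simp add: set_lebesgue_integral_def)
  also have "\<dots> = (\<integral>t. indicator {a..<qq n} (a + 1 * t) *\<^sub>R Gf n (a + 1 * t) \<partial>lborel)"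
  proof (rule Bochner_Integration.integral_cong[OF refl])
    fix t :: real
    show "indicator {0..} t *\<^sub>R g (surv_of M ?X t) = indicator {a..<qq n} (a + 1 * t) *\<^sub>R Gf n (a + 1 * t)"
    proof (cases "0 \<le> t")
      case True
      then show ?thesis using layer_surv[OF n a True] g0 by (auto simp: indicator_def Gf_def add.commute)
    qed (auto simp: indicator_def)
  qed
  also have "\<dots> = (\<integral>s. indicator {a..<qq n} s *\<^sub>R Gf n s \<partial>lborel)"
    using lborel_integral_real_affine[of 1 "\<lambda>s. indicator {a..<qq n} s *\<^sub>R Gf n s" a] by simp
  also have "\<dots> = IG n a (qq n)" by (simp add: IG_def set_lebesgue_integral_def)
  finally show ?thesis unfolding Pp_def wang_prem_def wang_premium_def by simp
qed

lemma Pp_q: "n < N \<Longrightarrow> Pp n (qq n) = 0"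
  using Pp_formula[of n "qq n"] qq_nonneg by (simp add: IG_def set_lebesgue_integral_def)

lemma Pp_diff:
  assumes "n < N" "0 \<le> a" "a \<le> b" "b \<le> qq n"
  shows "Pp n a = Pp n b + (1 + \<theta>) * IG n a b"
  using assms Pp_formula[of n a] Pp_formula[of n b] IG_add[of n a b "qq n"]
  by (simp add: algebra_simps)

lemma Pp_antimono:
  assumes "n < N" "0 \<le> a" "a \<le> b" "b \<le> qq n"
  shows "Pp n b \<le> Pp n a"
  using Pp_diff[OF assms] IG_nonneg[of n a b] assms theta by simp

lemma Pp_lip:
  assumes "n < N" "0 \<le> a" "a \<le> b" "b \<le> qq n"
  shows "Pp n a - Pp n b \<le> (1 + \<theta>) * (b - a)"
  using Pp_diff[OF assms] IG_le[of n a b] assms theta by (simp add: mult_left_mono)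

lemma Pp_nonneg:
  assumes "n < N" "0 \<le> a" "a \<le> qq n"
  shows "0 \<le> Pp n a"
  using Pp_antimono[of n a "qq n"] Pp_q assms by simp

lemma Gf_le_1a:
  assumes n: "n < N" and s: "s < qq n"
  shows "g (1 - \<alpha> n) \<le> Gf n s"
proof -
  have "cdf_of M (Y (Suc n)) s < \<alpha> n" by (rule qq_below[OF n s])
  hence "1 - \<alpha> n \<le> surv_of M (Y (Suc n)) s" unfolding surv_of_def by simp
  thus ?thesis unfolding Gf_def using alpha[OF n] surv_01 by (intro g_mono) auto
qed

lemma Gf_q_le:
  assumes n: "n < N"
  shows "Gf n (qq n) \<le> g (1 - \<alpha> n)"
proof -
  have "surv_of M (Y (Suc n)) (qq n) \<le> 1 - \<alpha> n" using qq_cdf[OF n] unfolding surv_of_def by simp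
  thus ?thesis unfolding Gf_def using alpha[OF n] surv_01 by (intro g_mono) auto
qed

lemma ast_props:
  assumes n: "n < N"
  shows "0 \<le> ast n \<and> ast n \<le> qq n \<and> (\<forall>s. 0 \<le> s \<and> s < ast n \<longrightarrow> 1 \<le> (1 + \<theta>) * Gf n s)
     \<and> (\<forall>s. ast n < s \<and> s \<le> qq n \<longrightarrow> (1 + \<theta>) * Gf n s \<le> 1)"
proof (cases "g (1 - \<alpha> n) < 1 / (1 + \<theta>)")
  case C: True
  define T where "T = {a \<in> {0..qq n}. 0 \<le> 1 - (1 + \<theta>) * Gf n a}"
  have astT: "ast n = Inf T" using C unfolding ast_def a_star_def T_def qq_def Gf_def by simp
  have th: "0 < 1 + \<theta>" using theta by simp
  have "(1 + \<theta>) * g (1 - \<alpha> n) < 1" using C th by (simp add: field_simps)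
  moreover have "(1 + \<theta>) * Gf n (qq n) \<le> (1 + \<theta>) * g (1 - \<alpha> n)"
    using Gf_q_le[OF n] th by simp
  ultimately have qT: "qq n \<in> T" unfolding T_def using qq_nonneg[OF n] by simp
  hence ne: "T \<noteq> {}" by auto
  have bdd: "bdd_below T" unfolding T_def by (rule bdd_belowI[of _ 0]) auto
  have A1: "0 \<le> Inf T" by (rule cInf_greatest[OF ne]) (auto simp: T_def)
  have A2: "Inf T \<le> qq n" by (rule cInf_lower[OF qT bdd])
  have A3: "1 \<le> (1 + \<theta>) * Gf n s" if "0 \<le> s" "s < Inf T" for s
  proof -
    have "s \<notin> T" using that cInf_lower[OF _ bdd, of s] by force
    thus ?thesis using that A2 unfolding T_def by auto
  qed
  have A4: "(1 + \<theta>) * Gf n s \<le> 1" if h: "Inf T < s" "s \<le> qq n" for s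
  proof -
    obtain t where t: "t \<in> T" "t < s" using cInf_less_iff[OF ne bdd, of s] h(1) by blast
    have "Gf n s \<le> Gf n t" using Gf_antimono[OF n] t by simp
    hence "(1 + \<theta>) * Gf n s \<le> (1 + \<theta>) * Gf n t" using th by simp
    thus ?thesis using t unfolding T_def by auto
  qed
  show ?thesis unfolding astT using A1 A2 A3 A4 by blast
next
  case C: False
  have astq: "ast n = qq n" using C unfolding ast_def a_star_def qq_def by simp
  have th: "0 < 1 + \<theta>" using theta by simp
  have A3: "1 \<le> (1 + \<theta>) * Gf n s" if "0 \<le> s" "s < qq n" for s
  proof -
    have "1 / (1 + \<theta>) \<le> Gf n s" using C Gf_le_1a[OF n that(2)] by simp
    thus ?thesis using th by (simp add: field_simps)
  qed
  show ?thesis unfolding astq using qq_nonneg[OF n] A3 by auto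
qed

lemma ast_nonneg: "n < N \<Longrightarrow> 0 \<le> ast n" using ast_props by blast
lemma ast_le_q: "n < N \<Longrightarrow> ast n \<le> qq n" using ast_props by blast

lemma W_dec:
  assumes n: "n < N" and ab: "0 \<le> a" "a \<le> b" "b \<le> ast n"
  shows "W n b \<le> W n a"
proof -
  have th: "0 < 1 + \<theta>" using theta by simp
  have "1 / (1 + \<theta>) * (b - a) \<le> IG n a b"
  proof (rule IG_lower[OF n ab(1,2)])
    fix s assume "a < s" "s < b"
    hence "1 \<le> (1 + \<theta>) * Gf n s" using ast_props[OF n] ab by auto
    thus "1 / (1 + \<theta>) \<le> Gf n s" using th by (simp add: field_simps)
  qed
  hence "b - a \<le> (1 + \<theta>) * IG n a b" using th by (simp add: field_simps)
  moreover have "Pp n a = Pp n b + (1 + \<theta>) * IG n a b"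
    using Pp_diff[OF n ab(1,2)] ab ast_le_q[OF n] by simp
  ultimately show ?thesis unfolding W_def by simp
qed

lemma W_inc:
  assumes n: "n < N" and ab: "ast n \<le> a" "a \<le> b" "b \<le> qq n"
  shows "W n a \<le> W n b"
proof -
  have th: "0 < 1 + \<theta>" using theta by simp
  have a0: "0 \<le> a" using ab ast_nonneg[OF n] by simp
  have "IG n a b \<le> 1 / (1 + \<theta>) * (b - a)"
  proof (rule IG_upper[OF n a0 ab(2)])
    fix s assume "a < s" "s < b"
    hence "(1 + \<theta>) * Gf n s \<le> 1" using ast_props[OF n] ab by auto
    thus "Gf n s \<le> 1 / (1 + \<theta>)" using th by (simp add: field_simps)
  qed
  hence "(1 + \<theta>) * IG n a b \<le> b - a" using th by (simp add: field_simps)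
  moreover have "Pp n a = Pp n b + (1 + \<theta>) * IG n a b"
    using Pp_diff[OF n a0 ab(2,3)] by simp
  ultimately show ?thesis unfolding W_def by simp
qed

lemma W_lip:
  assumes "n < N" "0 \<le> a" "a \<le> b" "b \<le> qq n"
  shows "W n b - W n a \<le> b - a" "W n a - W n b \<le> (1 + \<theta>) * (b - a)"
  using Pp_antimono[OF assms] Pp_lip[OF assms] assms unfolding W_def by auto

end

context model begin

definition "Aset n x = {a \<in> {ast n..qq n}. Pp n a \<le> max x 0}"
definition "aopt n x = Inf (Aset n x)"

lemma q_in_Aset: "n < N \<Longrightarrow> qq n \<in> Aset n x"
  unfolding Aset_def using Pp_q ast_le_q by simp

lemma Aset_props:
  assumes n: "n < N"
  shows "Aset n x \<noteq> {}" "bdd_below (Aset n x)"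
  using q_in_Aset[OF n] by (auto simp: Aset_def intro!: bdd_belowI[of _ "ast n"])

lemma aopt_mem: assumes n: "n < N" shows "aopt n x \<in> Aset n x"
proof -
  note ne = Aset_props(1)[OF n, of x] and bdd = Aset_props(2)[OF n, of x]
  let ?m = "aopt n x"
  have m1: "ast n \<le> ?m" unfolding aopt_def by (rule cInf_greatest[OF ne]) (auto simp: Aset_def)
  have m2: "?m \<le> qq n" unfolding aopt_def by (rule cInf_lower[OF q_in_Aset[OF n] bdd])
  have m0: "0 \<le> ?m" using m1 ast_nonneg[OF n] by simp
  have th: "0 < 1 + \<theta>" using theta by simp
  have "Pp n ?m \<le> max x 0"
  proof (rule ccontr)
    assume nle: "\<not> Pp n ?m \<le> max x 0"
    define \<epsilon> where "\<epsilon> = Pp n ?m - max x 0"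
    have e: "0 < \<epsilon>" using nle unfolding \<epsilon>_def by linarith
    have "Inf (Aset n x) < ?m + \<epsilon> / (1 + \<theta>)" using e th unfolding aopt_def by simp
    then obtain a where a: "a \<in> Aset n x" "a < ?m + \<epsilon> / (1 + \<theta>)"
      using cInf_less_iff[OF ne bdd] by blast
    have am: "?m \<le> a" unfolding aopt_def by (rule cInf_lower[OF a(1) bdd])
    have aq: "a \<le> qq n" using a(1) by (simp add: Aset_def)
    have "Pp n ?m - Pp n a \<le> (1 + \<theta>) * (a - ?m)" by (rule Pp_lip[OF n m0 am aq])
    also have "\<dots> < \<epsilon>" using a(2) th by (simp add: field_simps)
    finally have "Pp n ?m < Pp n a + \<epsilon>" by simp
    moreover have "Pp n a \<le> max x 0" using a(1) by (simp add: Aset_def)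
    ultimately show False unfolding \<epsilon>_def by linarith
  qed
  thus ?thesis using m1 m2 by (simp add: Aset_def)
qed

lemma aopt_min: assumes "n < N" "a \<in> Aset n x" shows "aopt n x \<le> a"
  unfolding aopt_def by (rule cInf_lower[OF assms(2) Aset_props(2)[OF assms(1)]])

lemma aopt_bounds: "n < N \<Longrightarrow> ast n \<le> aopt n x \<and> aopt n x \<le> qq n \<and> 0 \<le> aopt n x \<and> Pp n (aopt n x) \<le> max x 0"
proof -
  assume n: "n < N"
  have "aopt n x \<in> Aset n x" by (rule aopt_mem[OF n])
  hence "ast n \<le> aopt n x \<and> aopt n x \<le> qq n \<and> Pp n (aopt n x) \<le> max x 0" unfolding Aset_def by simp
  thus ?thesis using ast_nonneg[OF n] by linarith
qed

lemma a_opt_eq: "n < N \<Longrightarrow> a_opt M \<theta> g \<alpha> Y n x = aopt n x"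
  unfolding a_opt_def
proof (rule Least_equality)
  assume n: "n < N"
  show "aopt n x \<in> {a_star M \<theta> g \<alpha> Y n..q_level M \<alpha> Y n} \<and>
    wang_prem M \<theta> g Y n (layer (q_level M \<alpha> Y n) (aopt n x)) \<le> max x 0"
    using aopt_mem[OF n, of x] by (simp add: Aset_def ast_def qq_def Pp_def)
  fix y assume "y \<in> {a_star M \<theta> g \<alpha> Y n..q_level M \<alpha> Y n} \<and>
    wang_prem M \<theta> g Y n (layer (q_level M \<alpha> Y n) y) \<le> max x 0"
  hence "y \<in> Aset n x" by (simp add: Aset_def ast_def qq_def Pp_def)
  thus "aopt n x \<le> y" by (rule aopt_min[OF n])
qed

lemma d_star_eq: "n < N \<Longrightarrow> d_star M \<theta> g \<alpha> Y n x = layer (qq n) (aopt n x)"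
  unfolding d_star_def a_opt_eq by (simp add: qq_def)

lemma aopt_antimono: assumes n: "n < N" and x: "x \<le> x'" shows "aopt n x' \<le> aopt n x"
proof (rule aopt_min[OF n])
  have "aopt n x \<in> Aset n x" by (rule aopt_mem[OF n])
  moreover have "max x 0 \<le> max x' 0" using x by simp
  ultimately show "aopt n x \<in> Aset n x'" unfolding Aset_def by auto
qed

lemma aopt_rcont:
  assumes n: "n < N" and e: "0 < \<epsilon>"
  shows "\<exists>\<delta>>0. \<forall>x'. x \<le> x' \<and> x' < x + \<delta> \<longrightarrow> aopt n x - \<epsilon> < aopt n x'"
proof (cases "aopt n x - \<epsilon> < ast n")
  case True
  have "\<forall>x'. aopt n x - \<epsilon> < aopt n x'"
  proof
    fix x' show "aopt n x - \<epsilon> < aopt n x'" using True aopt_bounds[OF n, of x'] by linarith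
  qed
  thus ?thesis by (intro exI[of _ 1]) simp
next
  case False
  define b where "b = aopt n x - \<epsilon>"
  have b1: "ast n \<le> b" "b < aopt n x" using False e unfolding b_def by auto
  have bq: "b \<le> qq n" using b1 aopt_bounds[OF n, of x] by simp
  have "b \<notin> Aset n x" using aopt_min[OF n, of b x] b1 by force
  hence Pb: "max x 0 < Pp n b" using b1 bq by (auto simp: Aset_def)
  show ?thesis
  proof (rule exI[of _ "Pp n b - max x 0"], safe)
    show "0 < Pp n b - max x 0" using Pb by simp
    fix x' assume x': "x \<le> x'" "x' < x + (Pp n b - max x 0)"
    have mx: "max x' 0 < Pp n b" using x' Pb by (simp add: max_def split: if_splits)
    have m: "aopt n x' \<in> Aset n x'" by (rule aopt_mem[OF n])
    show "aopt n x - \<epsilon> < aopt n x'"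
    proof (rule ccontr)
      assume "\<not> aopt n x - \<epsilon> < aopt n x'"
      hence le: "aopt n x' \<le> b" unfolding b_def by simp
      have "Pp n b \<le> Pp n (aopt n x')"
        using Pp_antimono[OF n _ le bq] aopt_bounds[OF n, of x'] by simp
      thus False using m mx by (simp add: Aset_def)
    qed
  qed
qed

lemma W_opt:
  assumes n: "n < N" and a: "0 \<le> a" "a \<le> qq n" and P: "Pp n a \<le> max x 0"
  shows "W n (aopt n x) \<le> W n a"
proof (cases "ast n \<le> a")
  case True
  hence "a \<in> Aset n x" using a P by (simp add: Aset_def)
  hence "aopt n x \<le> a" by (rule aopt_min[OF n])
  thus ?thesis using W_inc[OF n _ _ a(2)] aopt_bounds[OF n, of x] by simp
next
  case False
  have "Pp n (ast n) \<le> Pp n a" using Pp_antimono[OF n a(1) _ ast_le_q[OF n]] False by simp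
  hence "ast n \<in> Aset n x" using P ast_le_q[OF n] by (simp add: Aset_def)
  hence "aopt n x \<le> ast n" by (rule aopt_min[OF n])
  hence "aopt n x = ast n" using aopt_bounds[OF n, of x] by simp
  thus ?thesis using W_dec[OF n a(1)] False by simp
qed

lemma aopt_meas: assumes n: "n < N" shows "aopt n \<in> borel_measurable borel"
proof -
  have "mono (\<lambda>x. - aopt n x)" by (rule monoI) (use aopt_antimono[OF n] in simp)
  hence "(\<lambda>x. - aopt n x) \<in> borel_measurable borel" by (rule borel_measurable_mono)
  hence "(\<lambda>x. - (- aopt n x)) \<in> borel_measurable borel" by measurable
  thus ?thesis by simp
qed

lemma layer_cont: "continuous_on UNIV (\<lambda>a. layer q a)"
proof (rule continuous_on_coordinatewise_then_product)
  fix t :: real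
  show "continuous_on UNIV (\<lambda>a. layer q a t)"
  proof (cases "t < 0")
    case True thus ?thesis by (simp add: layer_def)
  next
    case False thus ?thesis unfolding layer_def by (simp, intro continuous_intros)
  qed
qed

lemma d_star_meas: "n < N \<Longrightarrow> d_star M \<theta> g \<alpha> Y n \<in> borel_measurable borel"
proof -
  assume n: "n < N"
  have "(\<lambda>a. layer (qq n) a) \<in> borel_measurable borel"
    by (rule borel_measurable_continuous_onI[OF layer_cont])
  hence "(\<lambda>x. layer (qq n) (aopt n x)) \<in> borel_measurable borel"
    using aopt_meas[OF n] by (rule measurable_compose[rotated])
  moreover have "d_star M \<theta> g \<alpha> Y n = (\<lambda>x. layer (qq n) (aopt n x))"
    using d_star_eq[OF n] by (simp add: fun_eq_iff)
  ultimately show ?thesis by simp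
qed

end

lemma Fset_D:
  assumes "f \<in> Fset"
  shows "\<And>t. t < 0 \<Longrightarrow> f t = 0" "\<And>t. 0 \<le> t \<Longrightarrow> 0 \<le> f t" "\<And>t. 0 \<le> t \<Longrightarrow> f t \<le> t"
    "\<And>s t. 0 \<le> s \<Longrightarrow> s \<le> t \<Longrightarrow> f s \<le> f t"
    "\<And>s t. 0 \<le> s \<Longrightarrow> s \<le> t \<Longrightarrow> s - f s \<le> t - f t"
  using assms unfolding Fset_def by (auto intro: mono_onD)

lemma Fset_lip:
  assumes f: "f \<in> Fset"
  shows "\<bar>f s - f t\<bar> \<le> \<bar>s - t\<bar>"
proof -
  have *: "\<bar>f s - f t\<bar> \<le> \<bar>s - t\<bar>" if "s \<le> t" for s t
  proof (cases "0 \<le> s")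
    case True
    thus ?thesis using Fset_D(4,5)[OF f True that] by simp
  next
    case False
    hence "f s = 0" using Fset_D(1)[OF f] by simp
    moreover have "0 \<le> f t \<and> f t \<le> max t 0"
      using Fset_D(1,2,3)[OF f, of t] by (cases "0 \<le> t") auto
    ultimately show ?thesis using False that by auto
  qed
  show ?thesis using *[of s t] *[of t s] by (cases "s \<le> t") (auto simp: abs_minus_commute)
qed

lemma Fset_cont: "f \<in> Fset \<Longrightarrow> continuous_on UNIV f"
  by (rule lipschitz_on_continuous_on[of 1]) (rule lipschitz_onI, auto simp: dist_real_def Fset_lip)

lemma Fset_meas: "f \<in> Fset \<Longrightarrow> f \<in> borel_measurable borel"
  by (rule borel_measurable_continuous_onI[OF Fset_cont])

lemma Fset_le_layer:
  assumes f: "f \<in> Fset" and q: "0 \<le> q" and y: "0 \<le> y"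
  shows "f y \<le> layer q (f q) y"
proof (cases "y \<le> q")
  case True
  have "f y \<le> f q" "f y \<le> y" using Fset_D(4)[OF f y True] Fset_D(3)[OF f y] by auto
  thus ?thesis using y unfolding layer_def by auto
next
  case False
  have "q - f q \<le> y - f y" using Fset_D(5)[OF f q] False by simp
  thus ?thesis using y unfolding layer_def by auto
qed

definition rlsc :: "(real \<Rightarrow> real) \<Rightarrow> bool" where
  "rlsc J \<longleftrightarrow> (\<forall>c \<epsilon>. 0 < \<epsilon> \<longrightarrow> (\<exists>\<delta>>0. \<forall>t. c \<le> t \<and> t < c + \<delta> \<longrightarrow> J c - \<epsilon> < J t))"

definition antimono_fun :: "(real \<Rightarrow> real) \<Rightarrow> bool" where
  "antimono_fun J \<longleftrightarrow> (\<forall>s t. s \<le> t \<longrightarrow> J t \<le> J s)"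

lemma antimono_fun_meas:
  assumes "antimono_fun J" shows "J \<in> borel_measurable borel"
proof -
  have "mono (\<lambda>x. - J x)" using assms unfolding antimono_fun_def by (intro monoI) simp
  hence "(\<lambda>x. - J x) \<in> borel_measurable borel" by (rule borel_measurable_mono)
  hence "(\<lambda>x. - (- J x)) \<in> borel_measurable borel" by measurable
  thus ?thesis by simp
qed

context model begin

definition "psi n f J x y = f y + wang_prem M \<theta> g Y n f - z (Suc n) - x
   + \<beta> * J (x + z (Suc n) - f y - wang_prem M \<theta> g Y n f)"

lemma psi_mono:
  assumes f: "f \<in> Fset" and J: "antimono_fun J"
  shows "mono_on {0..} (psi n f J x)"
proof (rule mono_onI)
  fix r s :: real assume "r \<in> {0..}" "s \<in> {0..}" "r \<le> s"
  hence fr: "f r \<le> f s" using Fset_D(4)[OF f] by auto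
  hence "J (x + z (Suc n) - f r - wang_prem M \<theta> g Y n f) \<le> J (x + z (Suc n) - f s - wang_prem M \<theta> g Y n f)"
    using J unfolding antimono_fun_def by auto
  thus "psi n f J x r \<le> psi n f J x s" unfolding psi_def using fr beta
    by (simp add: mult_left_mono add_mono)
qed

lemma psi_lsc:
  assumes f: "f \<in> Fset" and J: "rlsc J" and c: "c < psi n f J x q"
  shows "\<exists>y0<q. \<forall>y. y0 < y \<and> y \<le> q \<longrightarrow> c < psi n f J x y"
proof -
  define C where "C = x + z (Suc n) - wang_prem M \<theta> g Y n f"
  define d where "d = psi n f J x q - c"
  have d: "0 < d" using c unfolding d_def by simp
  obtain \<delta>1 where d1: "\<delta>1 > 0" "\<forall>t. C - f q \<le> t \<and> t < C - f q + \<delta>1 \<longrightarrow> J (C - f q) - d / (2 * \<beta>) < J t"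
    using J d beta unfolding rlsc_def by (metis divide_pos_pos mult_pos_pos zero_less_numeral)
  define \<delta> where "\<delta> = min \<delta>1 (d / 2)"
  have dl: "0 < \<delta>" using d1 d unfolding \<delta>_def by simp
  show ?thesis
  proof (intro exI[of _ "q - \<delta>"] conjI allI impI)
    show "q - \<delta> < q" using dl by simp
    fix y assume y: "q - \<delta> < y \<and> y \<le> q"
    have l: "\<bar>f y - f q\<bar> \<le> \<bar>y - q\<bar>" by (rule Fset_lip[OF f])
    have fy: "f y \<le> f q"
    proof (cases "0 \<le> y")
      case True thus ?thesis using Fset_D(4)[OF f True] y by simp
    next
      case False thus ?thesis using Fset_D(1,2)[OF f] y by (cases "0 \<le> q") auto
    qed
    have t1: "C - f q \<le> C - f y" using fy by simp
    have t2: "C - f y < C - f q + \<delta>1" using l y unfolding \<delta>_def by auto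
    have "J (C - f q) - d / (2 * \<beta>) < J (C - f y)" using d1(2) t1 t2 by blast
    hence "\<beta> * J (C - f q) - d / 2 < \<beta> * J (C - f y)" using beta
      by (simp add: field_simps)
    moreover have "f q - d / 2 < f y" using l y unfolding \<delta>_def by auto
    moreover have e1: "C - f q = x + z (Suc n) - f q - wang_prem M \<theta> g Y n f"
      and e2: "C - f y = x + z (Suc n) - f y - wang_prem M \<theta> g Y n f" by (simp_all add: C_def)
    ultimately show "c < psi n f J x y" unfolding psi_def d_def e1 e2 by (simp add: field_simps)
  qed
qed

lemma psi_meas:
  assumes f: "f \<in> Fset" and J: "antimono_fun J"
  shows "psi n f J x \<in> borel_measurable borel"
proof -
  have [measurable]: "f \<in> borel_measurable borel" "J \<in> borel_measurable borel"
    using Fset_meas[OF f] antimono_fun_meas[OF J] by auto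
  show ?thesis unfolding psi_def[abs_def] by measurable
qed

lemma stage_eq_psi:
  "stage_value (\<lambda>n. VaR M (\<alpha> n)) (wang_prem M \<theta> g Y) Y z \<beta> n f J x
    = VaR M (\<alpha> n) (\<lambda>\<omega>. psi n f J x (Y (Suc n) \<omega>))"
  unfolding stage_value_def psi_def by simp

lemma stage_value_eq:
  assumes n: "n < N" and f: "f \<in> Fset" and J: "antimono_fun J" "rlsc J"
  shows "stage_value (\<lambda>n. VaR M (\<alpha> n)) (wang_prem M \<theta> g Y) Y z \<beta> n f J x = psi n f J x (qq n)"
proof -
  have m: "(\<lambda>\<omega>. psi n f J x (Y (Suc n) \<omega>)) \<in> borel_measurable M"
    using psi_meas[OF f J(1)] Yn_meas[OF n] by (rule measurable_compose[rotated])
  have nn: "\<forall>\<omega>\<in>space M. 0 \<le> Y (Suc n) \<omega>" using Yn_nn[OF n] by auto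
  have "VaR M (\<alpha> n) (\<lambda>\<omega>. psi n f J x (Y (Suc n) \<omega>)) \<le> psi n f J x (qq n)"
    unfolding qq_def2 by (rule VaR_upper[OF Yn_meas[OF n] alpha0[OF n] alpha1[OF n] nn m psi_mono[OF f J(1)]])
  moreover have "psi n f J x (qq n) \<le> VaR M (\<alpha> n) (\<lambda>\<omega>. psi n f J x (Y (Suc n) \<omega>))"
    unfolding qq_def2
    by (rule VaR_lower[OF Yn_meas[OF n] alpha0[OF n] alpha1[OF n] nn m _ psi_mono[OF f J(1)]])
       (auto intro: psi_lsc[OF f J(2)])
  ultimately show ?thesis unfolding stage_eq_psi by simp
qed

end

context model begin

abbreviation "RHO \<equiv> (\<lambda>n. VaR M (\<alpha> n))"
abbreviation "PREM \<equiv> wang_prem M \<theta> g Y"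
abbreviation "DS \<equiv> d_star M \<theta> g \<alpha> Y"

definition "Jd n x = markov_val_rem RHO PREM Y z \<beta> (N - n) DS n x"

lemma Jd_N: "Jd N x = 0" by (simp add: Jd_def)

lemma Jd_step: "n < N \<Longrightarrow> Jd n x = stage_value RHO PREM Y z \<beta> n (DS n x) (Jd (Suc n)) x"
proof -
  assume n: "n < N"
  hence "N - n = Suc (N - Suc n)" by simp
  thus ?thesis unfolding Jd_def[abs_def] stage_value_def by (simp add: Let_def)
qed

lemma DS_Fset: "n < N \<Longrightarrow> DS n x \<in> Fset"
  using d_star_eq[of n x] aopt_bounds[of n x] layer_Fset by simp

lemma DS_adm: "n < N \<Longrightarrow> DS n x \<in> adm_actions PREM n x"
  using d_star_eq[of n x] aopt_bounds[of n x] DS_Fset[of n x] by (simp add: adm_actions_def Pp_def)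

lemma Jd_formula:
  assumes n: "n < N" and J: "antimono_fun (Jd (Suc n))" "rlsc (Jd (Suc n))"
  shows "Jd n x = W n (aopt n x) - z (Suc n) - x + \<beta> * Jd (Suc n) (x + z (Suc n) - W n (aopt n x))"
proof -
  have "Jd n x = psi n (DS n x) (Jd (Suc n)) x (qq n)"
    using Jd_step[OF n] stage_value_eq[OF n DS_Fset[OF n] J] by simp
  moreover have "DS n x (qq n) = aopt n x" using d_star_eq[OF n] layer_at_q aopt_bounds[OF n] by simp
  moreover have "PREM n (DS n x) = Pp n (aopt n x)" using d_star_eq[OF n] by (simp add: Pp_def)
  ultimately show ?thesis unfolding psi_def W_def by (simp add: algebra_simps)
qed

lemma Phi_antimono:
  assumes n: "n < N" and x: "x \<le> x'"
  shows "W n (aopt n x') \<le> W n (aopt n x)"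
  using W_inc[OF n _ aopt_antimono[OF n x]] aopt_bounds[OF n] by simp

lemma Jd_props: "n \<le> N \<Longrightarrow> antimono_fun (Jd n) \<and> rlsc (Jd n)"
proof (induction n rule: inc_induct)
  case base
  show ?case by (simp add: Jd_N antimono_fun_def rlsc_def)
next
  case (step n)
  note n = step.hyps(2)
  have J: "antimono_fun (Jd (Suc n))" "rlsc (Jd (Suc n))" using step.IH by auto
  note F = Jd_formula[OF n J]
  define \<Phi> where "\<Phi> x = W n (aopt n x)" for x
  have F': "Jd n x = \<Phi> x - z (Suc n) - x + \<beta> * Jd (Suc n) (x + z (Suc n) - \<Phi> x)" for x
    unfolding \<Phi>_def by (rule F)
  have Pa: "\<Phi> x' \<le> \<Phi> x" if "x \<le> x'" for x x' unfolding \<Phi>_def by (rule Phi_antimono[OF n that])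
  have anti: "antimono_fun (Jd n)" unfolding antimono_fun_def
  proof (intro allI impI)
    fix x x' :: real assume xx: "x \<le> x'"
    have "Jd (Suc n) (x' + z (Suc n) - \<Phi> x') \<le> Jd (Suc n) (x + z (Suc n) - \<Phi> x)"
      using J(1) Pa[OF xx] xx unfolding antimono_fun_def by simp
    hence "\<beta> * Jd (Suc n) (x' + z (Suc n) - \<Phi> x') \<le> \<beta> * Jd (Suc n) (x + z (Suc n) - \<Phi> x)"
      using beta by simp
    thus "Jd n x' \<le> Jd n x" unfolding F' using Pa[OF xx] xx by simp
  qed
  have rl: "rlsc (Jd n)" unfolding rlsc_def
  proof (intro allI impI)
    fix x0 \<epsilon> :: real assume e: "0 < \<epsilon>"
    define c0 where "c0 = x0 + z (Suc n) - \<Phi> x0"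
    obtain \<delta>1 where d1: "\<delta>1 > 0" "\<forall>t. c0 \<le> t \<and> t < c0 + \<delta>1 \<longrightarrow> Jd (Suc n) c0 - \<epsilon> / (3 * \<beta>) < Jd (Suc n) t"
      using J(2) e beta unfolding rlsc_def by (metis divide_pos_pos mult_pos_pos zero_less_numeral)
    define m where "m = min (\<epsilon> / 3) (\<delta>1 / 2)"
    have m: "0 < m" using e d1 unfolding m_def by simp
    have th: "0 < 1 + \<theta>" using theta by simp
    obtain \<delta>2 where d2: "\<delta>2 > 0" "\<forall>x. x0 \<le> x \<and> x < x0 + \<delta>2 \<longrightarrow> aopt n x0 - m / (1 + \<theta>) < aopt n x"
      using aopt_rcont[OF n, of "m / (1 + \<theta>)" x0] m th by auto
    show "\<exists>\<delta>>0. \<forall>x. x0 \<le> x \<and> x < x0 + \<delta> \<longrightarrow> Jd n x0 - \<epsilon> < Jd n x"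
    proof (intro exI[of _ "min \<delta>2 m"] conjI allI impI)
      show "0 < min \<delta>2 m" using d2 m by simp
      fix x assume x: "x0 \<le> x \<and> x < x0 + min \<delta>2 m"
      have a1: "aopt n x0 - m / (1 + \<theta>) < aopt n x" using d2 x by auto
      have a2: "aopt n x \<le> aopt n x0" using aopt_antimono[OF n] x by simp
      have "\<Phi> x0 - \<Phi> x \<le> aopt n x0 - aopt n x"
        unfolding \<Phi>_def by (rule W_lip(1)[OF n _ a2]) (use aopt_bounds[OF n] in auto)
      also have "\<dots> \<le> (1 + \<theta>) * (aopt n x0 - aopt n x)" using a2 theta
        by (simp add: mult_le_cancel_right1)
      also have "\<dots> < (1 + \<theta>) * (m / (1 + \<theta>))" using a1 th by (intro mult_strict_left_mono) auto
      also have "\<dots> = m" using th by simp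
      finally have P1: "\<Phi> x0 - \<Phi> x < m" .
      have P2: "\<Phi> x \<le> \<Phi> x0" using Pa x by simp
      define c where "c = x + z (Suc n) - \<Phi> x"
      have "c0 \<le> c" using P2 x unfolding c_def c0_def by simp
      moreover have "c < c0 + \<delta>1" using P1 x unfolding c_def c0_def m_def by auto
      ultimately have "Jd (Suc n) c0 - \<epsilon> / (3 * \<beta>) < Jd (Suc n) c" using d1 by blast
      hence J1: "\<beta> * Jd (Suc n) c0 - \<epsilon> / 3 < \<beta> * Jd (Suc n) c" using beta by (simp add: field_simps)
      have "x - x0 < \<epsilon> / 3" "\<Phi> x0 - \<Phi> x < \<epsilon> / 3" using x P1 unfolding m_def by auto
      thus "Jd n x0 - \<epsilon> < Jd n x" unfolding F' using J1 unfolding c_def c0_def by (simp add: field_simps)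
    qed
  qed
  show ?case using anti rl by simp
qed

lemma stage_opt:
  assumes n: "n < N" and f: "f \<in> adm_actions PREM n x"
  shows "Jd n x \<le> stage_value RHO PREM Y z \<beta> n f (Jd (Suc n)) x"
proof -
  have J: "antimono_fun (Jd (Suc n))" "rlsc (Jd (Suc n))" using Jd_props[of "Suc n"] n by auto
  have fF: "f \<in> Fset" and fp: "PREM n f \<le> max x 0" using f by (auto simp: adm_actions_def)
  define a where "a = f (qq n)"
  have q0: "0 \<le> qq n" by (rule qq_nonneg[OF n])
  have a0: "0 \<le> a" "a \<le> qq n" using Fset_D(2,3)[OF fF q0] unfolding a_def by auto
  have "Pp n a \<le> PREM n f"
    unfolding Pp_def wang_prem_def
  proof (rule prem_mono[OF n])
    have [measurable]: "f \<in> borel_measurable borel" "layer (qq n) a \<in> borel_measurable borel"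
      using Fset_meas fF layer_Fset[OF a0] by auto
    have [measurable]: "Y (Suc n) \<in> borel_measurable M" by (rule Yn_meas[OF n])
    show "(\<lambda>\<omega>. Y (Suc n) \<omega> - layer (qq n) a (Y (Suc n) \<omega>)) \<in> borel_measurable M" by measurable
    show "(\<lambda>\<omega>. Y (Suc n) \<omega> - f (Y (Suc n) \<omega>)) \<in> borel_measurable M" by measurable
    show "\<forall>\<omega>\<in>space M. Y (Suc n) \<omega> - layer (qq n) a (Y (Suc n) \<omega>) \<le> Y (Suc n) \<omega> - f (Y (Suc n) \<omega>)"
      using Fset_le_layer[OF fF q0] Yn_nn[OF n] unfolding a_def by auto
    show "\<forall>\<omega>\<in>space M. Y (Suc n) \<omega> - f (Y (Suc n) \<omega>) \<le> Y (Suc n) \<omega>"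
      using Fset_D(2)[OF fF] Yn_nn[OF n] by auto
  qed
  hence Wle: "W n (aopt n x) \<le> a + PREM n f"
    using W_opt[OF n a0, of x] fp unfolding W_def by linarith
  have "stage_value RHO PREM Y z \<beta> n f (Jd (Suc n)) x = psi n f (Jd (Suc n)) x (qq n)"
    by (rule stage_value_eq[OF n fF J])
  also have "\<dots> = (a + PREM n f) - z (Suc n) - x + \<beta> * Jd (Suc n) (x + z (Suc n) - (a + PREM n f))"
    unfolding psi_def a_def by (simp add: algebra_simps)
  finally have S: "stage_value RHO PREM Y z \<beta> n f (Jd (Suc n)) x = (a + PREM n f) - z (Suc n) - x + \<beta> * Jd (Suc n) (x + z (Suc n) - (a + PREM n f))" .
  have "Jd (Suc n) (x + z (Suc n) - W n (aopt n x)) \<le> Jd (Suc n) (x + z (Suc n) - (a + PREM n f))"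
    using J(1) Wle unfolding antimono_fun_def by simp
  hence "\<beta> * Jd (Suc n) (x + z (Suc n) - W n (aopt n x)) \<le> \<beta> * Jd (Suc n) (x + z (Suc n) - (a + PREM n f))"
    using beta by simp
  thus ?thesis unfolding S Jd_formula[OF n J] using Wle by simp
qed

lemma stage_DS: "n < N \<Longrightarrow> stage_value RHO PREM Y z \<beta> n (DS n x) (Jd (Suc n)) x = Jd n x"
  using Jd_step by simp

end

lemma carath:
  fixes F :: "'b \<Rightarrow> real \<Rightarrow> real"
  assumes F: "\<And>t. (\<lambda>a. F a t) \<in> borel_measurable A"
    and cont: "\<And>a. a \<in> space A \<Longrightarrow> continuous_on UNIV (F a)"
    and T: "T \<in> borel_measurable A"
  shows "(\<lambda>a. F a (T a)) \<in> borel_measurable A"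
proof (rule borel_measurable_LIMSEQ_real)
  define r where "r k a = real_of_int \<lfloor>real (Suc k) * T a\<rfloor> / real (Suc k)" for k a
  show "(\<lambda>a. F a (r k a)) \<in> borel_measurable A" for k
  proof -
    have g: "(\<lambda>a. \<lfloor>real (Suc k) * T a\<rfloor>) \<in> measurable A (count_space UNIV)"
      using T by measurable
    have "(\<lambda>a. (\<lambda>i::int. F a (real_of_int i / real (Suc k))) (\<lfloor>real (Suc k) * T a\<rfloor>)) \<in> borel_measurable A"
      by (rule measurable_compose_countable'[where I=UNIV, OF _ g]) (auto intro: F)
    thus ?thesis unfolding r_def by simp
  qed
  fix a assume a: "a \<in> space A"
  have rT: "(\<lambda>k. r k a) \<longlonglongrightarrow> T a"
  proof -
    have b: "\<bar>r k a - T a\<bar> \<le> 1 / real (Suc k)" for k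
    proof -
      let ?c = "real (Suc k)"
      have c: "0 < ?c" by simp
      have "real_of_int \<lfloor>?c * T a\<rfloor> \<le> ?c * T a" "?c * T a < real_of_int \<lfloor>?c * T a\<rfloor> + 1"
        by linarith+
      hence "r k a \<le> T a" "T a < r k a + 1 / ?c" unfolding r_def using c
        by (simp_all add: field_simps)
      thus ?thesis by simp
    qed
    have "(\<lambda>k. 1 / real (Suc k)) \<longlonglongrightarrow> 0" by (rule LIMSEQ_Suc[OF lim_const_over_n[of 1]]) 
    hence "(\<lambda>k. r k a - T a) \<longlonglongrightarrow> 0"
      by (rule Lim_null_comparison[rotated]) (use b in \<open>auto intro!: always_eventually\<close>)
    thus ?thesis by (simp add: LIM_zero_iff)
  qed
  have "isCont (F a) (T a)" using cont[OF a] by (simp add: continuous_on_eq_continuous_at)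
  thus "(\<lambda>k. F a (r k a)) \<longlonglongrightarrow> F a (T a)" using rT by (rule isCont_tendsto_compose)
qed

context prob_space begin

lemma VaR_param_meas:
  assumes X: "X \<in> borel_measurable (A \<Otimes>\<^sub>M M)" and a: "0 < \<alpha>" "\<alpha> < 1"
  shows "(\<lambda>a. VaR M \<alpha> (\<lambda>\<omega>. X (a, \<omega>))) \<in> borel_measurable A"
proof -
  have "(\<lambda>a. emeasure M (Pair a -` {p \<in> space (A \<Otimes>\<^sub>M M). X p \<le> c})) \<in> borel_measurable A" for c
    by (rule sigma_finite_measure.measurable_emeasure_Pair) (use X in \<open>auto intro: sigma_finite_measure\<close>)
  hence em: "(\<lambda>a. measure M (Pair a -` {p \<in> space (A \<Otimes>\<^sub>M M). X p \<le> c})) \<in> borel_measurable A" for c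
    unfolding measure_def by measurable
  show ?thesis unfolding borel_measurable_iff_le
  proof
    fix c
    have "{a \<in> space A. VaR M \<alpha> (\<lambda>\<omega>. X (a, \<omega>)) \<le> c}
        = {a \<in> space A. \<alpha> \<le> measure M (Pair a -` {p \<in> space (A \<Otimes>\<^sub>M M). X p \<le> c})}"
    proof (rule Collect_cong)
      fix a show "(a \<in> space A \<and> VaR M \<alpha> (\<lambda>\<omega>. X (a, \<omega>)) \<le> c) =
          (a \<in> space A \<and> \<alpha> \<le> measure M (Pair a -` {p \<in> space (A \<Otimes>\<^sub>M M). X p \<le> c}))"
      proof (cases "a \<in> space A")
        case True
        have Xa: "(\<lambda>\<omega>. X (a, \<omega>)) \<in> borel_measurable M" by (rule measurable_Pair2[OF X True])
        have "Pair a -` {p \<in> space (A \<Otimes>\<^sub>M M). X p \<le> c} = {\<omega> \<in> space M. X (a, \<omega>) \<le> c}"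
          using True by (auto simp: space_pair_measure)
        thus ?thesis using VaR_le_iff[OF Xa a, of c] True by (simp add: cdf_of_def)
      qed simp
    qed
    also have "\<dots> \<in> sets A" using em[of c] by measurable
    finally show "{a \<in> space A. VaR M \<alpha> (\<lambda>\<omega>. X (a, \<omega>)) \<le> c} \<in> sets A" .
  qed
qed

end

context model begin

lemma prem_param_meas:
  assumes n: "n < N" and F: "\<And>t. (\<lambda>a. \<Phi> a t) \<in> borel_measurable A"
    and FS: "\<And>a. a \<in> space A \<Longrightarrow> \<Phi> a \<in> Fset"
  shows "(\<lambda>a. PREM n (\<Phi> a)) \<in> borel_measurable A"
proof -
  define gc where "gc u = g (max 0 (min 1 u))" for u
  have "mono gc" unfolding gc_def by (rule monoI) (intro g_mono, auto)
  hence gcm[measurable]: "gc \<in> borel_measurable borel" by (rule borel_measurable_mono)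
  have Ym[measurable]: "Y (Suc n) \<in> borel_measurable M" by (rule Yn_meas[OF n])
  let ?B = "A \<Otimes>\<^sub>M lborel"
  define Z where "Z q = Y (Suc n) (snd q) - \<Phi> (fst (fst q)) (Y (Suc n) (snd q)) - snd (fst q)" for q
  have Zm: "Z \<in> borel_measurable (?B \<Otimes>\<^sub>M M)"
  proof -
    have "(\<lambda>q. \<Phi> (fst (fst q)) (Y (Suc n) (snd q))) \<in> borel_measurable (?B \<Otimes>\<^sub>M M)"
    proof (rule carath[where F="\<lambda>q. \<Phi> (fst (fst q))" and T="\<lambda>q. Y (Suc n) (snd q)"])
      show "(\<lambda>q. \<Phi> (fst (fst q)) t) \<in> borel_measurable (?B \<Otimes>\<^sub>M M)" for t
        using F[of t] by measurable
      show "continuous_on UNIV (\<Phi> (fst (fst q)))" if "q \<in> space (?B \<Otimes>\<^sub>M M)" for q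
        using that FS Fset_cont by (auto simp: space_pair_measure)
      show "(\<lambda>q. Y (Suc n) (snd q)) \<in> borel_measurable (?B \<Otimes>\<^sub>M M)" by measurable
    qed
    thus ?thesis unfolding Z_def[abs_def] by measurable
  qed
  define Q where "Q = {q \<in> space (?B \<Otimes>\<^sub>M M). Z q \<le> 0}"
  have "Q \<in> sets (?B \<Otimes>\<^sub>M M)" unfolding Q_def using Zm by measurable
  hence "(\<lambda>p. emeasure M (Pair p -` Q)) \<in> borel_measurable ?B"
    by (rule sigma_finite_measure.measurable_emeasure_Pair[rotated]) (rule sigma_finite_measure)
  hence "(\<lambda>p. measure M (Pair p -` Q)) \<in> borel_measurable ?B" unfolding measure_def by measurable
  moreover have "Pair p -` Q = {\<omega> \<in> space M. Y (Suc n) \<omega> - \<Phi> (fst p) (Y (Suc n) \<omega>) \<le> snd p}"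
    if "p \<in> space ?B" for p
    using that unfolding Q_def Z_def by (auto simp: space_pair_measure)
  ultimately have mm: "(\<lambda>p. measure M {\<omega> \<in> space M. Y (Suc n) \<omega> - \<Phi> (fst p) (Y (Suc n) \<omega>) \<le> snd p})
      \<in> borel_measurable ?B"
  proof -
    assume m1: "(\<lambda>p. measure M (Pair p -` Q)) \<in> borel_measurable ?B"
      and e: "\<And>p. p \<in> space ?B \<Longrightarrow> Pair p -` Q = {\<omega> \<in> space M. Y (Suc n) \<omega> - \<Phi> (fst p) (Y (Suc n) \<omega>) \<le> snd p}"
    show ?thesis using m1 by (subst measurable_cong[where g="\<lambda>p. measure M (Pair p -` Q)"]) (auto simp: e)
  qed
  define f where "f a t = indicator {0..} t *\<^sub>R g (surv_of M (\<lambda>\<omega>. Y (Suc n) \<omega> - \<Phi> a (Y (Suc n) \<omega>)) t)" for a t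
  have "(\<lambda>p. indicator {0..} (snd p) *\<^sub>R gc (1 - measure M {\<omega> \<in> space M. Y (Suc n) \<omega> - \<Phi> (fst p) (Y (Suc n) \<omega>) \<le> snd p}))
     \<in> borel_measurable ?B" using mm by measurable
  moreover have "g (surv_of M X t) = gc (1 - measure M {\<omega> \<in> space M. X \<omega> \<le> t})" for X t
    using surv_01[of X t] unfolding gc_def surv_of_def cdf_of_def by simp
  ultimately have "(\<lambda>(a, t). f a t) \<in> borel_measurable ?B" unfolding f_def by (simp add: case_prod_beta')
  hence "(\<lambda>a. integral\<^sup>L lborel (f a)) \<in> borel_measurable A" by (rule lborel.borel_measurable_lebesgue_integral)
  hence "(\<lambda>a. (1 + \<theta>) * integral\<^sup>L lborel (f a)) \<in> borel_measurable A" by measurable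
  moreover have "PREM n (\<Phi> a) = (1 + \<theta>) * integral\<^sup>L lborel (f a)" for a
    unfolding wang_prem_def wang_premium_def set_lebesgue_integral_def f_def by simp
  ultimately show ?thesis by simp
qed

end

definition "nexth pol n h v = ((fst h)(Suc n := v), (snd h)(n := pol n h))"

lemma PiE_UNIV_ext: "(\<Pi>\<^sub>E k\<in>I. UNIV) = extensional I"
  by (simp add: PiE_def)

lemma space_hist: "space (hist_space n) = extensional {..n} \<times> extensional {..<n}"
  unfolding hist_space_def space_pair_measure space_PiM space_borel PiE_UNIV_ext ..

lemma ext_upd: "f \<in> extensional I \<Longrightarrow> f(i := v) \<in> extensional (insert i I)"
  unfolding extensional_def by simp

lemma nexth_space:
  assumes "h \<in> space (hist_space n)" shows "nexth pol n h v \<in> space (hist_space (Suc n))"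
proof -
  have "fst h \<in> extensional {..n}" "snd h \<in> extensional {..<n}" using assms unfolding space_hist by auto
  hence "(fst h)(Suc n := v) \<in> extensional {..Suc n}" "(snd h)(n := pol n h) \<in> extensional {..<Suc n}"
    using ext_upd[of "fst h" "{..n}" "Suc n" v] ext_upd[of "snd h" "{..<n}" n "pol n h"]
    by (simp_all add: atMost_Suc lessThan_Suc)
  thus ?thesis unfolding space_hist nexth_def by simp
qed

lemma eval_meas:
  assumes "\<Phi> \<in> measurable A (borel :: (real \<Rightarrow> real) measure)"
  shows "(\<lambda>a. \<Phi> a t) \<in> borel_measurable A"
  using assms borel_measurable_continuous_onI[OF continuous_on_product_coordinates]
  by (rule measurable_compose)

lemma fstH_meas:
  assumes H: "H \<in> measurable A (hist_space n)" and i: "i \<le> n"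
  shows "(\<lambda>a. fst (H a) i) \<in> borel_measurable A"
proof -
  have "(\<lambda>a. fst (H a)) \<in> measurable A (\<Pi>\<^sub>M k\<in>{..n}. borel)"
    using measurable_compose[OF H[unfolded hist_space_def] measurable_fst] by simp
  moreover have "(\<lambda>x. x i) \<in> measurable (\<Pi>\<^sub>M k\<in>{..n}. borel) borel"
    using measurable_component_singleton[of i "{..n}" "\<lambda>_. borel"] i by simp
  ultimately show ?thesis by (rule measurable_compose)
qed

lemma sndH_meas:
  assumes H: "H \<in> measurable A (hist_space n)" and i: "i < n"
  shows "(\<lambda>a. snd (H a) i) \<in> measurable A borel"
proof -
  have "(\<lambda>a. snd (H a)) \<in> measurable A (\<Pi>\<^sub>M k\<in>{..<n}. borel)"
    using measurable_compose[OF H[unfolded hist_space_def] measurable_snd] by simp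
  moreover have "(\<lambda>x. x i) \<in> measurable (\<Pi>\<^sub>M k\<in>{..<n}. borel) borel"
    using measurable_component_singleton[of i "{..<n}" "\<lambda>_. borel"] i by simp
  ultimately show ?thesis by (rule measurable_compose)
qed

context model begin

lemma pol_unf:
  assumes pol: "pol \<in> policies PREM N" and n: "n < N"
  shows "pol n \<in> measurable (restrict_space (hist_space n) (adm_hist PREM n)) borel"
    "\<forall>h\<in>adm_hist PREM n. pol n h \<in> adm_actions PREM n (fst h n)"
proof -
  have "\<forall>n<N. pol n \<in> measurable (restrict_space (hist_space n) (adm_hist PREM n)) borel
      \<and> (\<forall>h\<in>adm_hist PREM n. pol n h \<in> adm_actions PREM n (fst h n))"
    using pol unfolding policies_def by (rule CollectD)
  thus "pol n \<in> measurable (restrict_space (hist_space n) (adm_hist PREM n)) borel"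
    "\<forall>h\<in>adm_hist PREM n. pol n h \<in> adm_actions PREM n (fst h n)" using n by blast+
qed

lemma pol_props:
  assumes pol: "pol \<in> policies PREM N" and n: "n < N" and h: "h \<in> adm_hist PREM n"
  shows "pol n h \<in> Fset" "PREM n (pol n h) \<le> max (fst h n) 0"
  using pol_unf(2)[OF pol n] h unfolding adm_actions_def by blast+

lemma pol_meas:
  assumes pol: "pol \<in> policies PREM N" and n: "n < N"
  shows "pol n \<in> measurable (restrict_space (hist_space n) (adm_hist PREM n)) borel"
  by (rule pol_unf(1)[OF pol n])

lemma nexth_adm:
  assumes pol: "pol \<in> policies PREM N" and n: "n < N" and h: "h \<in> adm_hist PREM n"
  shows "nexth pol n h v \<in> adm_hist PREM (Suc n)"
proof -
  have hs: "h \<in> space (hist_space n)" and ha: "\<forall>k<n. snd h k \<in> adm_actions PREM k (fst h k)"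
    using h unfolding adm_hist_def by blast+
  have pa: "pol n h \<in> adm_actions PREM n (fst h n)" using pol_unf(2)[OF pol n] h by blast
  have "\<forall>k<Suc n. snd (nexth pol n h v) k \<in> adm_actions PREM k (fst (nexth pol n h v) k)"
  proof (intro allI impI)
    fix k assume "k < Suc n"
    thus "snd (nexth pol n h v) k \<in> adm_actions PREM k (fst (nexth pol n h v) k)"
      using ha pa unfolding nexth_def by (cases "k = n") auto
  qed
  thus ?thesis unfolding adm_hist_def using nexth_space[OF hs] by blast
qed

lemma nexth_meas:
  assumes pol: "pol \<in> policies PREM N" and n: "n < N"
    and H: "H \<in> measurable A (restrict_space (hist_space n) (adm_hist PREM n))"
    and K: "K \<in> borel_measurable A"
  shows "(\<lambda>a. nexth pol n (H a) (K a)) \<in> measurable A (restrict_space (hist_space (Suc n)) (adm_hist PREM (Suc n)))"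
proof -
  have H1: "H \<in> measurable A (hist_space n)" and H2: "\<forall>a\<in>space A. H a \<in> adm_hist PREM n"
    using H unfolding measurable_restrict_space2_iff Pi_def by blast+
  have Hs: "H a \<in> space (hist_space n)" if "a \<in> space A" for a using H2 that unfolding adm_hist_def by blast
  have P: "(\<lambda>a. pol n (H a)) \<in> measurable A borel"
    using H pol_meas[OF pol n] by (rule measurable_compose)
  have m1: "(\<lambda>a. (fst (H a))(Suc n := K a)) \<in> measurable A (\<Pi>\<^sub>M k\<in>{..Suc n}. borel)"
  proof (rule measurable_PiM_single'[where f="\<lambda>i a. ((fst (H a))(Suc n := K a)) i"])
    fix i assume i: "i \<in> {..Suc n}"
    show "(\<lambda>a. ((fst (H a))(Suc n := K a)) i) \<in> borel_measurable A"
    proof (cases "i = Suc n")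
      case True thus ?thesis using K by simp
    next
      case False thus ?thesis using fstH_meas[OF H1, of i] i by simp
    qed
  next
    show "(\<lambda>a. (fst (H a))(Suc n := K a)) \<in> space A \<rightarrow> (\<Pi>\<^sub>E k\<in>{..Suc n}. space borel)"
      using Hs unfolding space_hist space_borel PiE_UNIV_ext by (auto intro!: ext_upd[of _ _ _ _, simplified] simp: atMost_Suc lessThan_Suc mem_Times_iff)
  qed
  have m2: "(\<lambda>a. (snd (H a))(n := pol n (H a))) \<in> measurable A (\<Pi>\<^sub>M k\<in>{..<Suc n}. borel)"
  proof (rule measurable_PiM_single'[where f="\<lambda>i a. ((snd (H a))(n := pol n (H a))) i"])
    fix i assume i: "i \<in> {..<Suc n}"
    show "(\<lambda>a. ((snd (H a))(n := pol n (H a))) i) \<in> measurable A borel"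
    proof (cases "i = n")
      case True thus ?thesis using P by simp
    next
      case False thus ?thesis using sndH_meas[OF H1, of i] i by simp
    qed
  next
    show "(\<lambda>a. (snd (H a))(n := pol n (H a))) \<in> space A \<rightarrow> (\<Pi>\<^sub>E k\<in>{..<Suc n}. space borel)"
      using Hs unfolding space_hist space_borel PiE_UNIV_ext by (auto intro!: ext_upd[of _ _ _ _, simplified] simp: atMost_Suc lessThan_Suc mem_Times_iff)
  qed
  have "(\<lambda>a. nexth pol n (H a) (K a)) \<in> measurable A (hist_space (Suc n))"
    unfolding hist_space_def nexth_def using m1 m2 by (rule measurable_Pair)
  moreover have "\<forall>a\<in>space A. nexth pol n (H a) (K a) \<in> adm_hist PREM (Suc n)"
    using nexth_adm[OF pol n] H2 by blast
  ultimately show ?thesis unfolding measurable_restrict_space2_iff Pi_def by blast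
qed

end

context model begin

lemma polval_Suc:
  "polval_rem RHO PREM Y z \<beta> (Suc m) pol n h = VaR M (\<alpha> n) (\<lambda>\<omega>. pol n h (Y (Suc n) \<omega>) + PREM n (pol n h)
     - z (Suc n) - fst h n + \<beta> * polval_rem RHO PREM Y z \<beta> m pol (Suc n)
       (nexth pol n h (fst h n + z (Suc n) - pol n h (Y (Suc n) \<omega>) - PREM n (pol n h))))"
  by (simp add: Let_def nexth_def)

lemma fst_nexth: "fst (nexth pol n h v) (Suc n) = v" by (simp add: nexth_def)

lemma polval_meas0:
  assumes pol: "pol \<in> policies PREM N"
  shows "n + m \<le> N \<Longrightarrow> (\<lambda>h. polval_rem RHO PREM Y z \<beta> m pol n h)
    \<in> borel_measurable (restrict_space (hist_space n) (adm_hist PREM n))"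
proof (induction m arbitrary: n)
  case 0 thus ?case by simp
next
  case (Suc m)
  have n: "n < N" using Suc.prems by simp
  let ?A = "restrict_space (hist_space n) (adm_hist PREM n)"
  have H: "(\<lambda>h. h) \<in> measurable ?A ?A" by simp
  have H2: "\<forall>a\<in>space ?A. a \<in> adm_hist PREM n" by (simp add: space_restrict_space)
  have H1: "(\<lambda>h. h) \<in> measurable ?A (hist_space n)" by (rule measurable_restrict_space1) simp
  let ?B = "?A \<Otimes>\<^sub>M M"
  have Hf: "(\<lambda>p. fst p) \<in> measurable ?B ?A" by (rule measurable_fst)
  define f where "f p = pol n (fst p)" for p :: "_ \<times> 'a"
  have fm: "f \<in> measurable ?B borel" unfolding f_def
    using Hf pol_meas[OF pol n] by (rule measurable_compose)
  have fF: "f p \<in> Fset" if "p \<in> space ?B" for p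
    unfolding f_def by (rule pol_props(1)[OF pol n]) (use H2 that in \<open>auto simp: space_pair_measure\<close>)
  have Ym: "Y (Suc n) \<in> borel_measurable M" by (rule Yn_meas[OF n])
  have E: "(\<lambda>p. f p (Y (Suc n) (snd p))) \<in> borel_measurable ?B"
  proof (rule carath[where F=f and T="\<lambda>p. Y (Suc n) (snd p)"])
    show "(\<lambda>p. f p t) \<in> borel_measurable ?B" for t by (rule eval_meas[OF fm])
    show "continuous_on UNIV (f p)" if "p \<in> space ?B" for p by (rule Fset_cont[OF fF[OF that]])
    show "(\<lambda>p. Y (Suc n) (snd p)) \<in> borel_measurable ?B" using Ym by measurable
  qed
  have PR: "(\<lambda>p. PREM n (f p)) \<in> borel_measurable ?B"
    by (rule prem_param_meas[OF n eval_meas[OF fm] fF])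
  have X0: "(\<lambda>p. fst (fst p) n) \<in> borel_measurable ?B"
    using measurable_compose[OF measurable_fst fstH_meas[OF H1, of n]] by simp
  define K where "K p = fst (fst p) n + z (Suc n) - f p (Y (Suc n) (snd p)) - PREM n (f p)" for p
  have Km: "K \<in> borel_measurable ?B" unfolding K_def[abs_def] using X0 E PR by measurable
  have NX: "(\<lambda>p. nexth pol n (fst p) (K p)) \<in> measurable ?B (restrict_space (hist_space (Suc n)) (adm_hist PREM (Suc n)))"
    by (rule nexth_meas[OF pol n Hf Km])
  have IH: "(\<lambda>p. polval_rem RHO PREM Y z \<beta> m pol (Suc n) (nexth pol n (fst p) (K p))) \<in> borel_measurable ?B"
    using NX Suc.IH[of "Suc n"] Suc.prems by (intro measurable_compose[OF NX]) simp
  define X where "X p = f p (Y (Suc n) (snd p)) + PREM n (f p) - z (Suc n) - fst (fst p) n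
     + \<beta> * polval_rem RHO PREM Y z \<beta> m pol (Suc n) (nexth pol n (fst p) (K p))" for p
  have Xm: "X \<in> borel_measurable ?B" unfolding X_def[abs_def] using E PR X0 IH by measurable
  have "(\<lambda>a. VaR M (\<alpha> n) (\<lambda>\<omega>. X (a, \<omega>))) \<in> borel_measurable ?A"
    by (rule VaR_param_meas[OF Xm alpha0[OF n] alpha1[OF n]])
  moreover have "polval_rem RHO PREM Y z \<beta> (Suc m) pol n a = VaR M (\<alpha> n) (\<lambda>\<omega>. X (a, \<omega>))" for a
    unfolding polval_Suc X_def K_def f_def by simp
  ultimately show ?case by simp
qed

lemma polval_lower:
  assumes pol: "pol \<in> policies PREM N"
  shows "n + m = N \<Longrightarrow> h \<in> adm_hist PREM n \<Longrightarrow> Jd n (fst h n) \<le> polval_rem RHO PREM Y z \<beta> m pol n h"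
proof (induction m arbitrary: n h)
  case 0 thus ?case by (simp add: Jd_N)
next
  case (Suc m)
  have n: "n < N" using Suc.prems by simp
  note h = Suc.prems(2)
  define f where "f = pol n h"
  define x where "x = fst h n"
  have fa: "f \<in> adm_actions PREM n x" using pol_unf(2)[OF pol n] h unfolding f_def x_def by blast
  have fF: "f \<in> Fset" using fa by (simp add: adm_actions_def)
  have J: "antimono_fun (Jd (Suc n))" "rlsc (Jd (Suc n))" using Jd_props[of "Suc n"] n by auto
  have Ym[measurable]: "Y (Suc n) \<in> borel_measurable M" by (rule Yn_meas[OF n])
  have fm[measurable]: "f \<in> borel_measurable borel" by (rule Fset_meas[OF fF])
  define K where "K \<omega> = x + z (Suc n) - f (Y (Suc n) \<omega>) - PREM n f" for \<omega>
  have Km: "K \<in> borel_measurable M" unfolding K_def[abs_def] by measurable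
  have hsp: "h \<in> space (restrict_space (hist_space n) (adm_hist PREM n))"
    using h unfolding space_restrict_space adm_hist_def by blast
  have Hm: "(\<lambda>\<omega>. h) \<in> measurable M (restrict_space (hist_space n) (adm_hist PREM n))"
    using hsp by (rule measurable_const)
  have Pm: "(\<lambda>\<omega>. polval_rem RHO PREM Y z \<beta> m pol (Suc n) (nexth pol n h (K \<omega>))) \<in> borel_measurable M"
    using Suc.prems by (intro measurable_compose[OF nexth_meas[OF pol n Hm Km] polval_meas0[OF pol]]) simp
  define X where "X \<omega> = f (Y (Suc n) \<omega>) + PREM n f - z (Suc n) - x
     + \<beta> * polval_rem RHO PREM Y z \<beta> m pol (Suc n) (nexth pol n h (K \<omega>))" for \<omega>
  have Xm: "X \<in> borel_measurable M" unfolding X_def[abs_def] using Pm by measurable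
  have le: "\<forall>\<omega>\<in>space M. psi n f (Jd (Suc n)) x (Y (Suc n) \<omega>) \<le> X \<omega>"
  proof
    fix \<omega> assume "\<omega> \<in> space M"
    have "Jd (Suc n) (K \<omega>) \<le> polval_rem RHO PREM Y z \<beta> m pol (Suc n) (nexth pol n h (K \<omega>))"
      using Suc.IH[of "Suc n" "nexth pol n h (K \<omega>)"] Suc.prems nexth_adm[OF pol n h] by (simp add: fst_nexth)
    hence "\<beta> * Jd (Suc n) (K \<omega>) \<le> \<beta> * polval_rem RHO PREM Y z \<beta> m pol (Suc n) (nexth pol n h (K \<omega>))"
      using beta by simp
    thus "psi n f (Jd (Suc n)) x (Y (Suc n) \<omega>) \<le> X \<omega>" unfolding psi_def X_def K_def by simp
  qed
  have nn: "\<forall>\<omega>\<in>space M. 0 \<le> Y (Suc n) \<omega>" using Yn_nn[OF n] by auto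
  have "psi n f (Jd (Suc n)) x (qq n) \<le> VaR M (\<alpha> n) X"
    unfolding qq_def2
    by (rule VaR_lower[OF Ym alpha0[OF n] alpha1[OF n] nn Xm le psi_mono[OF fF J(1)]])
       (auto intro: psi_lsc[OF fF J(2)])
  moreover have "Jd n x \<le> psi n f (Jd (Suc n)) x (qq n)"
    using stage_opt[OF n fa] stage_value_eq[OF n fF J] by simp
  moreover have "polval_rem RHO PREM Y z \<beta> (Suc m) pol n h = VaR M (\<alpha> n) X"
    unfolding polval_Suc X_def K_def f_def x_def ..
  ultimately show ?case unfolding x_def by simp
qed

lemma polval_star:
  "n + m = N \<Longrightarrow> polval_rem RHO PREM Y z \<beta> m (\<lambda>n h. DS n (fst h n)) n h = Jd n (fst h n)"
proof (induction m arbitrary: n h)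
  case 0 thus ?case by (simp add: Jd_N)
next
  case (Suc m)
  have n: "n < N" using Suc.prems by simp
  have IH: "polval_rem RHO PREM Y z \<beta> m (\<lambda>n h. DS n (fst h n)) (Suc n) (nexth (\<lambda>n h. DS n (fst h n)) n h v)
      = Jd (Suc n) v" for v
    using Suc.IH[of "Suc n"] Suc.prems by (simp add: fst_nexth)
  show ?case unfolding polval_Suc IH Jd_step[OF n] stage_value_def by simp
qed

lemma polval_markov:
  "(\<forall>k\<ge>n. \<forall>h. pol k h = dd k (fst h k)) \<Longrightarrow>
    polval_rem RHO PREM Y z \<beta> m pol n h = markov_val_rem RHO PREM Y z \<beta> m dd n (fst h n)"
proof (induction m arbitrary: n h)
  case 0 thus ?case by simp
next
  case (Suc m)
  have IH: "polval_rem RHO PREM Y z \<beta> m pol (Suc n) (nexth pol n h v)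
      = markov_val_rem RHO PREM Y z \<beta> m dd (Suc n) v" for v
    using Suc.IH[of "Suc n"] Suc.prems by (simp add: fst_nexth)
  have "\<forall>h. pol n h = dd n (fst h n)" using Suc.prems by blast
  hence "pol n h = dd n (fst h n)" by blast
  thus ?case unfolding polval_Suc IH by (simp add: Let_def)
qed

end

context model begin

lemma DS_markov: "n < N \<Longrightarrow> DS n \<in> markov_rules PREM n"
  unfolding markov_rules_def using d_star_meas DS_adm by blast

lemma fst_hist_meas: "(\<lambda>h. fst h k) \<in> borel_measurable (restrict_space (hist_space k) S)"
proof (rule measurable_restrict_space1)
  have "(\<lambda>h. h) \<in> measurable (hist_space k) (hist_space k)" by simp
  thus "(\<lambda>h. fst h k) \<in> borel_measurable (hist_space k)" using fstH_meas by blast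
qed

lemma rule_policy_meas:
  assumes "d \<in> borel_measurable borel"
  shows "(\<lambda>h. d (fst h k)) \<in> measurable (restrict_space (hist_space k) S) (borel :: (real \<Rightarrow> real) measure)"
  using fst_hist_meas assms by (rule measurable_compose)

lemma pstar_policy: "(\<lambda>n h. DS n (fst h n)) \<in> policies PREM N"
  unfolding policies_def mem_Collect_eq
proof (intro allI impI conjI ballI)
  fix n assume n: "n < N"
  show "(\<lambda>h. DS n (fst h n)) \<in> measurable (restrict_space (hist_space n) (adm_hist PREM n)) borel"
    by (rule rule_policy_meas[OF d_star_meas[OF n]])
  fix h show "DS n (fst h n) \<in> adm_actions PREM n (fst h n)" by (rule DS_adm[OF n])
qed

lemma markov_lower:
  assumes n: "n \<le> N" and dd: "\<forall>k\<in>{n..<N}. dd k \<in> markov_rules PREM k"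
  shows "Jd n x \<le> markov_val_rem RHO PREM Y z \<beta> (N - n) dd n x"
proof -
  define pol where "pol k h = (if k < n then DS k (fst h k) else dd k (fst h k))" for k and h :: hist
  have polp: "pol \<in> policies PREM N"
    unfolding policies_def mem_Collect_eq
  proof (intro allI impI conjI ballI)
    fix k assume k: "k < N"
    show "pol k \<in> measurable (restrict_space (hist_space k) (adm_hist PREM k)) borel"
    proof (cases "k < n")
      case True
      hence "pol k = (\<lambda>h. DS k (fst h k))" by (simp add: pol_def fun_eq_iff)
      thus ?thesis using rule_policy_meas[OF d_star_meas[OF k]] by simp
    next
      case False
      hence "pol k = (\<lambda>h. dd k (fst h k))" by (simp add: pol_def fun_eq_iff)
      moreover have "dd k \<in> borel_measurable borel" using dd False k by (auto simp: markov_rules_def)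
      ultimately show ?thesis using rule_policy_meas by simp
    qed
    fix h show "pol k h \<in> adm_actions PREM k (fst h k)"
    proof (cases "k < n")
      case True thus ?thesis using DS_adm[OF k] by (simp add: pol_def)
    next
      case False
      hence "dd k \<in> markov_rules PREM k" using dd k by auto
      thus ?thesis using False by (simp add: pol_def markov_rules_def)
    qed
  qed
  define h0 where "h0 = ((\<lambda>k\<in>{..n}. x), (\<lambda>k\<in>{..<n}. DS k x))"
  have "h0 \<in> space (hist_space n)" unfolding space_hist h0_def by simp
  moreover have "\<forall>k<n. snd h0 k \<in> adm_actions PREM k (fst h0 k)"
    using DS_adm n unfolding h0_def by simp
  ultimately have h0a: "h0 \<in> adm_hist PREM n" unfolding adm_hist_def by blast
  have "Jd n (fst h0 n) \<le> polval_rem RHO PREM Y z \<beta> (N - n) pol n h0"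
    by (rule polval_lower[OF polp]) (use n h0a in auto)
  also have "\<dots> = markov_val_rem RHO PREM Y z \<beta> (N - n) dd n (fst h0 n)"
    by (rule polval_markov) (simp add: pol_def)
  finally show ?thesis by (simp add: h0_def)
qed

lemma opt_markov_eq:
  assumes n: "n < N"
  shows "opt_markov_value RHO PREM Y z \<beta> N (Suc n) = Jd (Suc n)"
proof
  fix x
  let ?D = "{dd. \<forall>k\<in>{Suc n..<N}. dd k \<in> markov_rules PREM k}"
  let ?f = "\<lambda>dd. markov_val_rem RHO PREM Y z \<beta> (N - Suc n) dd (Suc n) x"
  have "DS \<in> ?D" using DS_markov by auto
  hence "Jd (Suc n) x \<in> ?f ` ?D" unfolding Jd_def by force
  moreover have "\<And>y. y \<in> ?f ` ?D \<Longrightarrow> Jd (Suc n) x \<le> y"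
    using markov_lower[of "Suc n"] n by auto
  ultimately have "Inf (?f ` ?D) = Jd (Suc n) x" by (rule cInf_eq_minimum)
  thus "opt_markov_value RHO PREM Y z \<beta> N (Suc n) x = Jd (Suc n) x"
    unfolding opt_markov_value_def by simp
qed

lemma T_eq:
  assumes n: "n < N"
  shows "T_dec RHO PREM Y z \<beta> n (DS n) (opt_markov_value RHO PREM Y z \<beta> N (Suc n)) x = Jd n x"
    "T_opt RHO PREM Y z \<beta> n (opt_markov_value RHO PREM Y z \<beta> N (Suc n)) x = Jd n x"
proof -
  show "T_dec RHO PREM Y z \<beta> n (DS n) (opt_markov_value RHO PREM Y z \<beta> N (Suc n)) x = Jd n x"
    unfolding T_dec_def opt_markov_eq[OF n] by (rule stage_DS[OF n])
  let ?f = "\<lambda>f. stage_value RHO PREM Y z \<beta> n f (Jd (Suc n)) x"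
  have "Jd n x \<in> ?f ` adm_actions PREM n x"
    using imageI[OF DS_adm[OF n, of x], of ?f] stage_DS[OF n, of x] by simp
  moreover have "\<And>y. y \<in> ?f ` adm_actions PREM n x \<Longrightarrow> Jd n x \<le> y"
    using stage_opt[OF n] by auto
  ultimately have "Inf (?f ` adm_actions PREM n x) = Jd n x" by (rule cInf_eq_minimum)
  thus "T_opt RHO PREM Y z \<beta> n (opt_markov_value RHO PREM Y z \<beta> N (Suc n)) x = Jd n x"
    unfolding T_opt_def opt_markov_eq[OF n] by simp
qed

lemma init_adm: "init_hist x \<in> adm_hist PREM 0"
  unfolding adm_hist_def init_hist_def space_hist by (simp add: extensional_def)

lemma policy_opt:
  shows "policy_value RHO PREM Y z \<beta> N (\<lambda>n h. DS n (fst h n)) 0 (init_hist x)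
          = (INF \<pi> \<in> policies PREM N. policy_value RHO PREM Y z \<beta> N \<pi> 0 (init_hist x))"
    "\<forall>\<pi> \<in> policies PREM N. policy_value RHO PREM Y z \<beta> N (\<lambda>n h. DS n (fst h n)) 0 (init_hist x)
          \<le> policy_value RHO PREM Y z \<beta> N \<pi> 0 (init_hist x)"
proof -
  have s: "policy_value RHO PREM Y z \<beta> N (\<lambda>n h. DS n (fst h n)) 0 (init_hist x) = Jd 0 x"
    unfolding policy_value_def using polval_star[of 0 N "init_hist x"] by (simp add: init_hist_def)
  have l: "Jd 0 x \<le> policy_value RHO PREM Y z \<beta> N \<pi> 0 (init_hist x)" if "\<pi> \<in> policies PREM N" for \<pi>
    unfolding policy_value_def using polval_lower[OF that, of 0 N "init_hist x"] init_adm
    by (simp add: init_hist_def)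
  show "\<forall>\<pi> \<in> policies PREM N. policy_value RHO PREM Y z \<beta> N (\<lambda>n h. DS n (fst h n)) 0 (init_hist x)
          \<le> policy_value RHO PREM Y z \<beta> N \<pi> 0 (init_hist x)" using s l by simp
  let ?f = "\<lambda>\<pi>. policy_value RHO PREM Y z \<beta> N \<pi> 0 (init_hist x)"
  have "Jd 0 x \<in> ?f ` policies PREM N" using pstar_policy s by force
  moreover have "\<And>y. y \<in> ?f ` policies PREM N \<Longrightarrow> Jd 0 x \<le> y" using l by auto
  ultimately have "Inf (?f ` policies PREM N) = Jd 0 x" by (rule cInf_eq_minimum)
  thus "policy_value RHO PREM Y z \<beta> N (\<lambda>n h. DS n (fst h n)) 0 (init_hist x)
          = (INF \<pi> \<in> policies PREM N. policy_value RHO PREM Y z \<beta> N \<pi> 0 (init_hist x))" using s by simp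
qed

lemma aopt_claim:
  assumes n: "n < N"
  shows "\<exists>a. a \<in> {a_star M \<theta> g \<alpha> Y n..q_level M \<alpha> Y n}
          \<and> wang_prem M \<theta> g Y n (layer (q_level M \<alpha> Y n) a) \<le> max x 0
          \<and> (\<forall>b. b \<in> {a_star M \<theta> g \<alpha> Y n..q_level M \<alpha> Y n}
                 \<and> wang_prem M \<theta> g Y n (layer (q_level M \<alpha> Y n) b) \<le> max x 0 \<longrightarrow> a \<le> b)"
proof (intro exI[of _ "aopt n x"] conjI allI impI)
  show "aopt n x \<in> {a_star M \<theta> g \<alpha> Y n..q_level M \<alpha> Y n}"
    "wang_prem M \<theta> g Y n (layer (q_level M \<alpha> Y n) (aopt n x)) \<le> max x 0"
    using aopt_mem[OF n, of x] by (simp_all add: Aset_def ast_def qq_def Pp_def)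
  fix b assume "b \<in> {a_star M \<theta> g \<alpha> Y n..q_level M \<alpha> Y n} \<and> wang_prem M \<theta> g Y n (layer (q_level M \<alpha> Y n) b) \<le> max x 0"
  hence "b \<in> Aset n x" by (simp add: Aset_def ast_def qq_def Pp_def)
  thus "aopt n x \<le> b" by (rule aopt_min[OF n])
qed

end

theorem mainTheorem10:
  fixes M :: "'a measure" and Y :: "nat \<Rightarrow> 'a \<Rightarrow> real" and N :: nat
    and p \<beta> \<theta> :: real and \<alpha> z :: "nat \<Rightarrow> real" and g :: "real \<Rightarrow> real"
  assumes "prob_space M" and "1 \<le> p"
    and "\<forall>k\<in>{1..N}. Y k \<in> borel_measurable M \<and> (\<forall>\<omega>\<in>space M. 0 \<le> Y k \<omega>)
           \<and> integrable M (\<lambda>\<omega>. \<bar>Y k \<omega>\<bar> powr p)"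
    and "prob_space.indep_vars M (\<lambda>_. borel) Y {1..N}"
    and "0 < \<beta>" and "\<beta> \<le> 1"
    and "\<forall>n<N. 0 < \<alpha> n \<and> \<alpha> n < 1"
    and "\<forall>k\<in>{1..N}. 0 \<le> z k"
    and "0 \<le> \<theta>" and "distortion g" and "\<forall>u\<in>{0<..1}. (g \<longlongrightarrow> g u) (at_left u)"
    and "\<forall>n<N. set_integrable lborel {0..} (\<lambda>t. g (surv_of M (Y (Suc n)) t))"
  shows "(\<forall>n<N. \<forall>a\<in>{0..q_level M \<alpha> Y n}. layer (q_level M \<alpha> Y n) a \<in> Fset)
    \<and> (\<forall>n<N. \<forall>x. \<exists>a. a \<in> {a_star M \<theta> g \<alpha> Y n..q_level M \<alpha> Y n}
          \<and> wang_prem M \<theta> g Y n (layer (q_level M \<alpha> Y n) a) \<le> max x 0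
          \<and> (\<forall>b. b \<in> {a_star M \<theta> g \<alpha> Y n..q_level M \<alpha> Y n}
                 \<and> wang_prem M \<theta> g Y n (layer (q_level M \<alpha> Y n) b) \<le> max x 0 \<longrightarrow> a \<le> b))
    \<and> (\<forall>n<N. d_star M \<theta> g \<alpha> Y n \<in> markov_rules (wang_prem M \<theta> g Y) n)
    \<and> (\<forall>n<N. \<forall>x.
          T_dec (\<lambda>n. VaR M (\<alpha> n)) (wang_prem M \<theta> g Y) Y z \<beta> n (d_star M \<theta> g \<alpha> Y n)
            (opt_markov_value (\<lambda>n. VaR M (\<alpha> n)) (wang_prem M \<theta> g Y) Y z \<beta> N (Suc n)) x
        = T_opt (\<lambda>n. VaR M (\<alpha> n)) (wang_prem M \<theta> g Y) Y z \<beta> n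
            (opt_markov_value (\<lambda>n. VaR M (\<alpha> n)) (wang_prem M \<theta> g Y) Y z \<beta> N (Suc n)) x)
    \<and> (\<lambda>n h. d_star M \<theta> g \<alpha> Y n (fst h n)) \<in> policies (wang_prem M \<theta> g Y) N
    \<and> (\<forall>x. policy_value (\<lambda>n. VaR M (\<alpha> n)) (wang_prem M \<theta> g Y) Y z \<beta> N
               (\<lambda>n h. d_star M \<theta> g \<alpha> Y n (fst h n)) 0 (init_hist x)
          = (INF \<pi> \<in> policies (wang_prem M \<theta> g Y) N.
               policy_value (\<lambda>n. VaR M (\<alpha> n)) (wang_prem M \<theta> g Y) Y z \<beta> N \<pi> 0 (init_hist x))
        \<and> (\<forall>\<pi> \<in> policies (wang_prem M \<theta> g Y) N.
               policy_value (\<lambda>n. VaR M (\<alpha> n)) (wang_prem M \<theta> g Y) Y z \<beta> N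
                 (\<lambda>n h. d_star M \<theta> g \<alpha> Y n (fst h n)) 0 (init_hist x)
             \<le> policy_value (\<lambda>n. VaR M (\<alpha> n)) (wang_prem M \<theta> g Y) Y z \<beta> N \<pi> 0 (init_hist x)))"
proof -
  have mdl: "model M Y N \<beta> \<theta> \<alpha> g"
    unfolding model_def model_axioms_def
  proof (intro conjI allI impI)
    show "prob_space M" by fact
    show "\<And>k. k \<in> {1..N} \<Longrightarrow> Y k \<in> borel_measurable M" using assms(3) by blast
    show "\<And>k \<omega>. k \<in> {1..N} \<Longrightarrow> \<omega> \<in> space M \<Longrightarrow> 0 \<le> Y k \<omega>" using assms(3) by blast
    show "0 < \<beta>" by fact
    show "\<And>n. n < N \<Longrightarrow> 0 < \<alpha> n" using assms(7) by blast
    show "\<And>n. n < N \<Longrightarrow> \<alpha> n < 1" using assms(7) by blast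
    show "0 \<le> \<theta>" by fact
    show "distortion g" by fact
    show "\<And>n. n < N \<Longrightarrow> set_integrable lborel {0..} (\<lambda>t. g (surv_of M (Y (Suc n)) t))"
      using assms(12) by blast
  qed
  interpret model M Y N \<beta> \<theta> \<alpha> z g by (rule mdl)
  have c1: "\<forall>n<N. \<forall>a\<in>{0..q_level M \<alpha> Y n}. layer (q_level M \<alpha> Y n) a \<in> Fset"
    using layer_Fset by auto
  have c2: "\<forall>n<N. \<forall>x. \<exists>a. a \<in> {a_star M \<theta> g \<alpha> Y n..q_level M \<alpha> Y n}
          \<and> wang_prem M \<theta> g Y n (layer (q_level M \<alpha> Y n) a) \<le> max x 0
          \<and> (\<forall>b. b \<in> {a_star M \<theta> g \<alpha> Y n..q_level M \<alpha> Y n}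
                 \<and> wang_prem M \<theta> g Y n (layer (q_level M \<alpha> Y n) b) \<le> max x 0 \<longrightarrow> a \<le> b)"
    using aopt_claim by blast
  have c3: "\<forall>n<N. d_star M \<theta> g \<alpha> Y n \<in> markov_rules (wang_prem M \<theta> g Y) n"
    using DS_markov by blast
  have c4: "\<forall>n<N. \<forall>x.
          T_dec (\<lambda>n. VaR M (\<alpha> n)) (wang_prem M \<theta> g Y) Y z \<beta> n (d_star M \<theta> g \<alpha> Y n)
            (opt_markov_value (\<lambda>n. VaR M (\<alpha> n)) (wang_prem M \<theta> g Y) Y z \<beta> N (Suc n)) x
        = T_opt (\<lambda>n. VaR M (\<alpha> n)) (wang_prem M \<theta> g Y) Y z \<beta> n
            (opt_markov_value (\<lambda>n. VaR M (\<alpha> n)) (wang_prem M \<theta> g Y) Y z \<beta> N (Suc n)) x"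
    using T_eq by simp
  have c5: "(\<lambda>n h. d_star M \<theta> g \<alpha> Y n (fst h n)) \<in> policies (wang_prem M \<theta> g Y) N"
    by (rule pstar_policy)
  show ?thesis using c1 c2 c3 c4 c5 policy_opt by blast
qed

end
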